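(* Let $\lambda$ be a strict partition of $n$ (all parts distinct), with $\ell(\lambda)$ parts, and let $Q_\lambda$ be Schur's $Q$-function. Let $\mathcal{C}_n$ be a set of compositions of $n$ containing exactly one composition with each peak set. Define the numbers $d_{\lambda I}$ ($I\in\mathcal C_n$) by $$2^{-\lfloor\ell(\lambda)/2\rfloor}Q_\lambda=\sum_{I\in\mathcal{C}_n}d_{\lambda I}\,2^{-\lfloor(|HP(I)|+1)/2\rfloor}\,\Theta_{HP(I)}.$$ These are the decomposition numbers expressing the characteristic of the generic Hecke–Clifford simple module $U_\lambda$ in terms of the characteristics of the simple $HCl_n(0)$-supermodules. Then $$d_{\lambda I}=2^{\lfloor(|HP(I)|+1)/2\rfloor-\lfloor\ell(\lambda)/2\rfloor}\,\big|\{T\in\mathcal{ST}^\lambda:\ \Lambda(T)=HP(I)\}\big|.$$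
   Context: For a composition $K$ of $n$, $\operatorname{Des}(K)$ is the set of its partial sums (excluding $n$), and $HP(K)=\{a\in\operatorname{Des}(K):a\ne1,\ a-1\notin\operatorname{Des}(K)\}$. For a peak set $P\subseteq[2,n-1]$, $\Theta_P=2^{|P|+1}\sum_{K\models n,\ P\subseteq\operatorname{Des}(K)\Delta(\operatorname{Des}(K)+1)}F_K$, where $F_K$ is the fundamental quasi-symmetric function, $A+1=\{a+1:a\in A\}$, and $\Delta$ is symmetric difference; the $\Theta_P$ are linearly independent. $\mathcal{ST}^\lambda$ is the set of standard shifted Young tableaux of shape $\lambda$ (row $j$ shifted $j-1$ cells to the right, entries $1,\dots,n$ increasing along rows and columns). For $T\in\mathcal{ST}^\lambda$, its descent set is $D(T)=\{i: i+1 \text{ lies in a row strictly below the row of } i\}$, and its peak set is $\Lambda(T)=\{i\in D(T): i\ne1,\ i-1\notin D(T)\}$. *)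

theory Defs
  imports Complex_Main
begin

definition compositions :: "nat \<Rightarrow> nat list set" where
  "compositions n = {K. (\<forall>x\<in>set K. 0 < x) \<and> sum_list K = n}"

definition Des :: "nat list \<Rightarrow> nat set" where
  "Des K = {sum_list (take i K) | i. 1 \<le> i \<and> i < length K}"

definition HP :: "nat list \<Rightarrow> nat set" where
  "HP K = {a \<in> Des K. a \<noteq> 1 \<and> a - 1 \<notin> Des K}"

text \<open>A (bounded degree) formal power series in countably many commuting variables
  x_0, x_1, x_2, ... is represented by its coefficient function on monomials; a monomial
  is given by its exponent vector alpha :: nat => nat (alpha v = exponent of x_v).\<close>
type_synonym series = "(nat \<Rightarrow> nat) \<Rightarrow> real"

definition Fq :: "nat list \<Rightarrow> series" where
  "Fq K \<alpha> = real (card {f :: nat \<Rightarrow> nat.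
      (\<forall>j. j \<notin> {1..sum_list K} \<longrightarrow> f j = 0)
    \<and> (\<forall>j \<in> {1..<sum_list K}. f j \<le> f (j + 1) \<and> (j \<in> Des K \<longrightarrow> f j < f (j + 1)))
    \<and> (\<forall>v. \<alpha> v = card {j \<in> {1..sum_list K}. f j = v})})"

definition Theta :: "nat \<Rightarrow> nat set \<Rightarrow> series" where
  "Theta n P \<alpha> = 2 ^ (card P + 1) *
     (\<Sum>K \<in> {K \<in> compositions n.
                P \<subseteq> (Des K - (\<lambda>a. a + 1) ` Des K) \<union> ((\<lambda>a. a + 1) ` Des K - Des K)}.
        Fq K \<alpha>)"

definition strict_partition :: "nat list \<Rightarrow> nat \<Rightarrow> bool" where
  "strict_partition lam n \<longleftrightarrow> sorted_wrt (>) lam \<and> (\<forall>x\<in>set lam. 0 < x) \<and> sum_list lam = n"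

text \<open>Shifted diagram (0-indexed): row r has cells (r,c) with r <= c < r + lam_r.\<close>
definition shifted_diagram :: "nat list \<Rightarrow> (nat \<times> nat) set" where
  "shifted_diagram lam = {(r, c). r < length lam \<and> r \<le> c \<and> c < r + lam ! r}"

text \<open>Marked shifted tableaux: entries from the alphabet 0' < 0 < 1' < 1 < ...,
  encoded as positive naturals: v' is 2v+1 and v is 2v+2 (odd = primed);
  cells outside the diagram carry 0. Rows and columns weakly increase, each unprimed
  letter appears at most once in each column, each primed letter at most once in each row.
  (Primes on the main diagonal are allowed: this gives Q rather than P.)\<close>
definition marked_shifted_tableaux :: "nat list \<Rightarrow> ((nat \<times> nat) \<Rightarrow> nat) set" where
  "marked_shifted_tableaux lam = {T.
      (\<forall>p. p \<notin> shifted_diagram lam \<longrightarrow> T p = 0)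
    \<and> (\<forall>p \<in> shifted_diagram lam. 0 < T p)
    \<and> (\<forall>r c. (r, c) \<in> shifted_diagram lam \<and> (r, c + 1) \<in> shifted_diagram lam \<longrightarrow>
         T (r, c) \<le> T (r, c + 1) \<and> (T (r, c) = T (r, c + 1) \<longrightarrow> even (T (r, c))))
    \<and> (\<forall>r c. (r, c) \<in> shifted_diagram lam \<and> (r + 1, c) \<in> shifted_diagram lam \<longrightarrow>
         T (r, c) \<le> T (r + 1, c) \<and> (T (r, c) = T (r + 1, c) \<longrightarrow> odd (T (r, c))))}"

text \<open>Content: exponent of x_v counts entries v and v'.\<close>
definition tableau_content :: "nat list \<Rightarrow> ((nat \<times> nat) \<Rightarrow> nat) \<Rightarrow> nat \<Rightarrow> nat" where
  "tableau_content lam T v = card {p \<in> shifted_diagram lam. (T p - 1) div 2 = v}"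

definition SchurQ :: "nat list \<Rightarrow> series" where
  "SchurQ lam \<alpha> = real (card {T \<in> marked_shifted_tableaux lam. tableau_content lam T = \<alpha>})"

definition standard_shifted_tableaux :: "nat list \<Rightarrow> ((nat \<times> nat) \<Rightarrow> nat) set" where
  "standard_shifted_tableaux lam = {T.
      (\<forall>p. p \<notin> shifted_diagram lam \<longrightarrow> T p = 0)
    \<and> bij_betw T (shifted_diagram lam) {1..sum_list lam}
    \<and> (\<forall>r c. (r, c) \<in> shifted_diagram lam \<and> (r, c + 1) \<in> shifted_diagram lam \<longrightarrow>
         T (r, c) < T (r, c + 1))
    \<and> (\<forall>r c. (r, c) \<in> shifted_diagram lam \<and> (r + 1, c) \<in> shifted_diagram lam \<longrightarrow>
         T (r, c) < T (r + 1, c))}"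

definition row_of :: "nat list \<Rightarrow> ((nat \<times> nat) \<Rightarrow> nat) \<Rightarrow> nat \<Rightarrow> nat" where
  "row_of lam T i = fst (the_inv_into (shifted_diagram lam) T i)"

definition tab_Des :: "nat list \<Rightarrow> ((nat \<times> nat) \<Rightarrow> nat) \<Rightarrow> nat set" where
  "tab_Des lam T = {i \<in> {1..<sum_list lam}. row_of lam T i < row_of lam T (i + 1)}"

definition tab_Peak :: "nat list \<Rightarrow> ((nat \<times> nat) \<Rightarrow> nat) \<Rightarrow> nat set" where
  "tab_Peak lam T = {i \<in> tab_Des lam T. i \<noteq> 1 \<and> i - 1 \<notin> tab_Des lam T}"

end

theory Submission
  imports Defs
begin


definition Rset :: "nat set \<Rightarrow> nat set \<Rightarrow> nat set set" where
  "Rset S P = {E. E \<subseteq> S \<and> (\<forall>p\<in>P. p \<in> E \<longleftrightarrow> p - 1 \<notin> E)}"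

lemma toggle_half:
  assumes fin: "finite X" and tX: "\<And>E. E \<in> X \<Longrightarrow> t E \<in> X"
    and inv: "\<And>E. E \<in> X \<Longrightarrow> t (t E) = E"
    and sw: "\<And>E. E \<in> X \<Longrightarrow> Q (t E) \<longleftrightarrow> \<not> Q E"
  shows "card X = 2 * card {E\<in>X. Q E}"
proof -
  have b: "bij_betw t {E\<in>X. Q E} {E\<in>X. \<not> Q E}"
    unfolding bij_betw_def
  proof
    show "inj_on t {E \<in> X. Q E}" by (metis (mono_tags, lifting) inj_onI inv mem_Collect_eq)
    show "t ` {E \<in> X. Q E} = {E \<in> X. \<not> Q E}"
    proof
      show "t ` {E \<in> X. Q E} \<subseteq> {E \<in> X. \<not> Q E}" using tX sw by auto
      show "{E \<in> X. \<not> Q E} \<subseteq> t ` {E \<in> X. Q E}"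
      proof
        fix E assume "E \<in> {E \<in> X. \<not> Q E}"
        then have "t E \<in> {E \<in> X. Q E}" "t (t E) = E" using tX sw inv by auto
        then show "E \<in> t ` {E \<in> X. Q E}" by force
      qed
    qed
  qed
  have "card {E\<in>X. Q E} = card {E\<in>X. \<not> Q E}" using bij_betw_same_card[OF b] .
  moreover have "card X = card {E\<in>X. Q E} + card {E\<in>X. \<not> Q E}"
  proof -
    have "X = {E\<in>X. Q E} \<union> {E\<in>X. \<not> Q E}" by auto
    then show ?thesis using fin by (metis (no_types, lifting) card_Un_disjoint disjoint_iff finite_Un mem_Collect_eq)
  qed
  ultimately show ?thesis by simp
qed

lemma Rset_count:
  assumes "finite P" "finite S" "0 \<notin> P" "\<forall>p\<in>P. p + 1 \<notin> P"
  shows "2 ^ card P * card (Rset S P) = (if \<forall>p\<in>P. p \<in> S \<or> p - 1 \<in> S then 2 ^ card S else 0)"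
  using assms
proof (induction P rule: finite_induct)
  case empty
  have "Rset S {} = Pow S" unfolding Rset_def by auto
  then show ?case using empty by (simp add: card_Pow)
next
  case (insert p P0)
  have h0: "0 \<notin> P0" "\<forall>p\<in>P0. p + 1 \<notin> P0" using insert.prems by auto
  note IH = insert.IH[OF insert.prems(1) h0]
  have p0: "p \<noteq> 0" using insert.prems by auto
  have pp1: "p + 1 \<notin> P0" using insert.prems by auto
  have pm1: "p - 1 \<notin> P0" using insert.prems p0
    by (metis Suc_diff_1 Suc_eq_plus1 insertI1 insert_iff neq0_conv)
  have finR: "finite (Rset S P0)" unfolding Rset_def using insert.prems(1) by auto
  have Req: "Rset S (insert p P0) = {E \<in> Rset S P0. p \<in> E \<longleftrightarrow> p - 1 \<notin> E}"
    unfolding Rset_def by auto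
  show ?case
  proof (cases "p \<in> S \<or> p - 1 \<in> S")
    case True
    obtain x where x: "x \<in> S" "x = p \<or> x = p - 1" using True by blast
    have xp: "x \<notin> P0" "\<forall>q\<in>P0. q - 1 \<noteq> x"
    proof -
      show "x \<notin> P0" using x pm1 insert.hyps(2) by auto
      show "\<forall>q\<in>P0. q - 1 \<noteq> x"
      proof
        fix q assume q: "q \<in> P0"
        then have "q \<noteq> 0" using h0(1) by metis
        then show "q - 1 \<noteq> x" using x q pp1 insert.hyps(2) p0
          by (metis Suc_diff_1 Suc_eq_plus1 bot_nat_0.not_eq_extremum)
      qed
    qed
    define t where "t E = (if x \<in> E then E - {x} else insert x E)" for E
    have "card (Rset S P0) = 2 * card {E \<in> Rset S P0. p \<in> E \<longleftrightarrow> p - 1 \<notin> E}"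
    proof (rule toggle_half[OF finR, of t])
      fix E assume E: "E \<in> Rset S P0"
      show "t E \<in> Rset S P0" using E x xp unfolding Rset_def t_def by auto
      show "t (t E) = E" unfolding t_def by auto
      show "(p \<in> t E \<longleftrightarrow> p - 1 \<notin> t E) \<longleftrightarrow> \<not> (p \<in> E \<longleftrightarrow> p - 1 \<notin> E)"
        using x p0 unfolding t_def by auto
    qed
    then have "card (Rset S P0) = 2 * card (Rset S (insert p P0))" using Req by simp
    moreover have "card (insert p P0) = Suc (card P0)" using insert.hyps by simp
    ultimately show ?thesis using IH True
      by (smt (verit) insert_iff mult.assoc mult.commute power_Suc)
  next
    case False
    have "Rset S (insert p P0) = {}" unfolding Rset_def using False by auto
    then show ?thesis using False by simp
  qed
qed


definition Valid :: "nat \<Rightarrow> nat set \<Rightarrow> nat set \<Rightarrow> nat set \<Rightarrow> bool" where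
  "Valid n S D A \<longleftrightarrow> (\<forall>j\<in>{1..<n}. j \<notin> S \<longrightarrow>
      (j + 1 \<in> A \<longrightarrow> j \<in> A) \<and> ((j \<in> A \<longleftrightarrow> j + 1 \<in> A) \<longrightarrow> (j \<in> A \<longleftrightarrow> j \<in> D)))"

definition cntA :: "nat \<Rightarrow> nat set \<Rightarrow> nat set \<Rightarrow> bool \<Rightarrow> nat" where
  "cntA n S D b = card {A. A \<subseteq> {1..n} \<and> Valid n S D A \<and> (n \<in> A \<longleftrightarrow> b)}"

definition transOK :: "nat \<Rightarrow> nat set \<Rightarrow> nat set \<Rightarrow> bool \<Rightarrow> bool \<Rightarrow> bool" where
  "transOK n S D b b' \<longleftrightarrow> (n \<in> S \<or> ((b' \<longrightarrow> b) \<and> ((b \<longleftrightarrow> b') \<longrightarrow> (b \<longleftrightarrow> n \<in> D))))"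

definition condp :: "nat \<Rightarrow> nat set \<Rightarrow> nat set \<Rightarrow> bool" where
  "condp n S D \<longleftrightarrow> (\<forall>p. p \<in> D \<and> p \<noteq> 1 \<and> p - 1 \<notin> D \<and> p < n \<longrightarrow> p \<in> S \<or> p - 1 \<in> S)"

lemma Valid_ext:
  assumes "A \<subseteq> {1..n}" "n \<ge> 1"
  shows "Valid (Suc n) S D (if b' then insert (Suc n) A else A) \<longleftrightarrow>
         Valid n S D A \<and> transOK n S D (n \<in> A) b'"
proof -
  let ?B = "if b' then insert (Suc n) A else A"
  have m: "\<And>j. j \<le> n \<Longrightarrow> (j \<in> ?B \<longleftrightarrow> j \<in> A)" by auto
  have s: "Suc n \<in> ?B \<longleftrightarrow> b'" using assms by auto
  have "Valid (Suc n) S D ?B \<longleftrightarrow> Valid n S D ?B \<and> (n \<notin> S \<longrightarrow>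
      (n + 1 \<in> ?B \<longrightarrow> n \<in> ?B) \<and> ((n \<in> ?B \<longleftrightarrow> n + 1 \<in> ?B) \<longrightarrow> (n \<in> ?B \<longleftrightarrow> n \<in> D)))"
    unfolding Valid_def using assms(2) by (auto simp: less_Suc_eq)
  also have "Valid n S D ?B \<longleftrightarrow> Valid n S D A"
    unfolding Valid_def using m by (auto simp del: One_nat_def)
  finally show ?thesis using m[of n] s unfolding transOK_def by auto
qed

lemma cntA_Suc:
  assumes "n \<ge> 1"
  shows "cntA (Suc n) S D b' = (if transOK n S D True b' then cntA n S D True else 0)
                             + (if transOK n S D False b' then cntA n S D False else 0)"
proof -
  define g where "g A = (if b' then insert (Suc n) A else A)" for A
  define X where "X b = {A. A \<subseteq> {1..n} \<and> Valid n S D A \<and> (n \<in> A \<longleftrightarrow> b)}" for b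
  define Y where "Y b = (if transOK n S D b b' then X b else {})" for b
  have inj: "inj_on g (Pow {1..n})"
  proof (rule inj_on_inverseI)
    fix x assume "x \<in> Pow {1..n}"
    then show "g x - {Suc n} = x" unfolding g_def by auto
  qed
  have eq: "{A. A \<subseteq> {1..Suc n} \<and> Valid (Suc n) S D A \<and> (Suc n \<in> A \<longleftrightarrow> b')} = g ` (Y True \<union> Y False)"
  proof
    show "{A. A \<subseteq> {1..Suc n} \<and> Valid (Suc n) S D A \<and> (Suc n \<in> A \<longleftrightarrow> b')} \<subseteq> g ` (Y True \<union> Y False)"
    proof
      fix B assume B: "B \<in> {A. A \<subseteq> {1..Suc n} \<and> Valid (Suc n) S D A \<and> (Suc n \<in> A \<longleftrightarrow> b')}"
      let ?A = "B - {Suc n}"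
      have A1: "?A \<subseteq> {1..n}" using B by auto
      have gA: "g ?A = B" using B unfolding g_def by auto
      have "Valid n S D ?A \<and> transOK n S D (n \<in> ?A) b'"
        using Valid_ext[OF A1 assms, of S D b'] B gA unfolding g_def by auto
      then have "?A \<in> Y (n \<in> ?A)" unfolding Y_def X_def using A1 by auto
      then have "?A \<in> Y True \<union> Y False" by (cases "n \<in> ?A") auto
      then show "B \<in> g ` (Y True \<union> Y False)" using gA by force
    qed
    show "g ` (Y True \<union> Y False) \<subseteq> {A. A \<subseteq> {1..Suc n} \<and> Valid (Suc n) S D A \<and> (Suc n \<in> A \<longleftrightarrow> b')}"
    proof
      fix B assume "B \<in> g ` (Y True \<union> Y False)"
      then obtain A b where A: "A \<in> Y b" "B = g A" by auto
      then have A1: "A \<subseteq> {1..n}" "Valid n S D A" "transOK n S D (n \<in> A) b'"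
        unfolding Y_def X_def by (auto split: if_splits)
      then have "Valid (Suc n) S D B" using Valid_ext[OF A1(1) assms, of S D b'] A unfolding g_def by auto
      moreover have "B \<subseteq> {1..Suc n}" using A1 A unfolding g_def by auto
      moreover have "Suc n \<in> B \<longleftrightarrow> b'" using A1 A unfolding g_def by auto
      ultimately show "B \<in> {A. A \<subseteq> {1..Suc n} \<and> Valid (Suc n) S D A \<and> (Suc n \<in> A \<longleftrightarrow> b')}" by auto
    qed
  qed
  have sub: "Y True \<union> Y False \<subseteq> Pow {1..n}" unfolding Y_def X_def by auto
  have fin: "finite (Y b)" for b unfolding Y_def X_def by auto
  have disj: "Y True \<inter> Y False = {}" unfolding Y_def X_def by auto
  have "cntA (Suc n) S D b' = card (g ` (Y True \<union> Y False))" unfolding cntA_def eq ..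
  also have "\<dots> = card (Y True \<union> Y False)" using inj sub by (meson card_image inj_on_subset)
  also have "\<dots> = card (Y True) + card (Y False)" using fin disj by (simp add: card_Un_disjoint)
  finally show ?thesis unfolding Y_def X_def cntA_def by simp
qed

lemma cntA_closed:
  assumes "n \<ge> 1"
  shows "cntA n S D True = (if condp n S D \<and> (n = 1 \<or> n - 1 \<in> D \<or> n - 1 \<in> S) then 2 ^ card (S \<inter> {1..<n}) else 0)
       \<and> cntA n S D False = (if condp n S D then (if n = 1 \<or> n - 1 \<in> D \<or> n - 1 \<in> S then 2 ^ card (S \<inter> {1..<n}) else 2 ^ (card (S \<inter> {1..<n}) + 1)) else 0)"
  using assms
proof (induction n rule: nat_induct_at_least)
  case base
  have "{A. A \<subseteq> {1..1} \<and> Valid 1 S D A \<and> (1 \<in> A \<longleftrightarrow> True)} = {{1}}" unfolding Valid_def by auto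
  moreover have "{A. A \<subseteq> {1..1} \<and> Valid 1 S D A \<and> (1 \<in> A \<longleftrightarrow> False)} = {{}}" unfolding Valid_def by auto
  moreover have "condp 1 S D" unfolding condp_def by auto
  ultimately show ?case unfolding cntA_def by simp
next
  case (Suc n)
  let ?k = "card (S \<inter> {1..<n})"
  have fin: "finite (S \<inter> {1..<n})" by auto
  have kS: "card (S \<inter> {1..<Suc n}) = (if n \<in> S then Suc ?k else ?k)"
  proof -
    have "S \<inter> {1..<Suc n} = (if n \<in> S then insert n (S \<inter> {1..<n}) else S \<inter> {1..<n})"
      using Suc.hyps by (auto simp: less_Suc_eq)
    then show ?thesis using fin by auto
  qed
  have cS: "condp (Suc n) S D \<longleftrightarrow> condp n S D \<and> (n \<in> D \<and> n \<noteq> 1 \<and> n - 1 \<notin> D \<longrightarrow> n \<in> S \<or> n - 1 \<in> S)"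
    unfolding condp_def by (auto simp: less_Suc_eq)
  note rec = cntA_Suc[OF Suc.hyps, of S D]
  note IH = Suc.IH
  show ?case
  proof (cases "n \<in> S")
    case True
    then show ?thesis using rec IH kS cS unfolding transOK_def by auto
  next
    case nS: False
    show ?thesis
    proof (cases "n \<in> D")
      case True
      then show ?thesis using rec IH kS cS nS unfolding transOK_def by auto
    next
      case False
      then show ?thesis using rec IH kS cS nS Suc.hyps unfolding transOK_def by auto
    qed
  qed
qed

lemma Valid_count:
  assumes "n \<ge> 1" "S \<subseteq> {1..<n}" "D \<subseteq> {1..<n}"
  shows "card {A. A \<subseteq> {1..n} \<and> Valid n S D A} =
     (if \<forall>p\<in>{i\<in>D. i \<noteq> 1 \<and> i - 1 \<notin> D}. p \<in> S \<or> p - 1 \<in> S then 2 ^ (card S + 1) else 0)"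
proof -
  have "{A. A \<subseteq> {1..n} \<and> Valid n S D A} = {A. A \<subseteq> {1..n} \<and> Valid n S D A \<and> (n \<in> A \<longleftrightarrow> True)}
        \<union> {A. A \<subseteq> {1..n} \<and> Valid n S D A \<and> (n \<in> A \<longleftrightarrow> False)}" by auto
  then have "card {A. A \<subseteq> {1..n} \<and> Valid n S D A} = cntA n S D True + cntA n S D False"
    unfolding cntA_def by (subst card_Un_disjoint[symmetric]) auto
  moreover have "S \<inter> {1..<n} = S" using assms by auto
  moreover have "condp n S D \<longleftrightarrow> (\<forall>p\<in>{i\<in>D. i \<noteq> 1 \<and> i - 1 \<notin> D}. p \<in> S \<or> p - 1 \<in> S)"
    unfolding condp_def using assms(3) by (smt (verit) atLeastLessThan_iff mem_Collect_eq subset_iff)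
  ultimately show ?thesis using cntA_closed[OF assms(1), of S D] by auto
qed


lemma mono_interval:
  fixes f :: "nat \<Rightarrow> nat" and n i j :: nat
  assumes "\<forall>i\<in>{1..<n}. f i \<le> f (i + 1)" "1 \<le> i" "i \<le> j" "j \<le> n"
  shows "f i \<le> (f j :: nat)"
  using assms(3,4)
proof (induction j rule: dec_induct)
  case base then show ?case by simp
next
  case (step m)
  then have "f m \<le> f (m + 1)" using assms(1,2) by auto
  then show ?case using step by simp
qed

lemma sorted_unique:
  fixes f g :: "nat \<Rightarrow> nat"
  assumes mf: "\<forall>i\<in>{1..<n}. f i \<le> f (i + 1)" and mg: "\<forall>i\<in>{1..<n}. g i \<le> g (i + 1)"
    and c: "\<forall>v. card {j\<in>{1..n}. f j = v} = card {j\<in>{1..n}. g j = v}"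
    and j: "j \<in> {1..n}"
  shows "f j = g j"
proof -
  have cle: "card {i\<in>{1..n}. f i \<le> v} = card {i\<in>{1..n}. g i \<le> v}" for v
  proof (induction v)
    case 0
    then show ?case using c by simp
  next
    case (Suc v)
    have "\<And>h::nat\<Rightarrow>nat. card {i\<in>{1..n}. h i \<le> Suc v} = card {i\<in>{1..n}. h i \<le> v} + card {i\<in>{1..n}. h i = Suc v}"
    proof -
      fix h :: "nat \<Rightarrow> nat"
      have "{i\<in>{1..n}. h i \<le> Suc v} = {i\<in>{1..n}. h i \<le> v} \<union> {i\<in>{1..n}. h i = Suc v}" by auto
      then show "card {i\<in>{1..n}. h i \<le> Suc v} = card {i\<in>{1..n}. h i \<le> v} + card {i\<in>{1..n}. h i = Suc v}"
        by (simp add: card_Un_disjoint disjoint_iff)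
    qed
    then show ?case using Suc c by simp
  qed
  have key: "h j \<le> v \<longleftrightarrow> j \<le> card {i\<in>{1..n}. h i \<le> v}"
    if mh: "\<forall>i\<in>{1..<n}. h i \<le> h (i + 1)" for h :: "nat \<Rightarrow> nat" and v
  proof
    assume "h j \<le> v"
    then have "{1..j} \<subseteq> {i\<in>{1..n}. h i \<le> v}" using mono_interval[OF mh] j by fastforce
    then have "card {1..j} \<le> card {i\<in>{1..n}. h i \<le> v}" by (intro card_mono) auto
    then show "j \<le> card {i\<in>{1..n}. h i \<le> v}" by simp
  next
    assume a: "j \<le> card {i\<in>{1..n}. h i \<le> v}"
    show "h j \<le> v"
    proof (rule ccontr)
      assume "\<not> h j \<le> v"
      have "{i\<in>{1..n}. h i \<le> v} \<subseteq> {1..<j}"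
      proof
        fix i assume i: "i \<in> {i\<in>{1..n}. h i \<le> v}"
        show "i \<in> {1..<j}"
        proof (rule ccontr)
          assume "i \<notin> {1..<j}"
          then have "j \<le> i" using i by auto
          then have "h j \<le> h i" using mono_interval[OF mh, of j i] j i by auto
          then show False using i \<open>\<not> h j \<le> v\<close> by auto
        qed
      qed
      then have "card {i\<in>{1..n}. h i \<le> v} \<le> card {1..<j}" by (intro card_mono) auto
      then have "card {i\<in>{1..n}. h i \<le> v} \<le> j - 1" by simp
      then show False using a j by auto
    qed
  qed
  have "f j \<le> v \<longleftrightarrow> g j \<le> v" for v using key[OF mf] key[OF mg] cle by metis
  then show ?thesis by (meson le_antisym order_refl)
qed


lemma Des_Cons: "Des (a # K) = (if K = [] then {} else insert a ((+) a ` Des K))"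
proof (cases "K = []")
  case True then show ?thesis unfolding Des_def by auto
next
  case False
  have "Des (a # K) = insert a ((+) a ` Des K)"
  proof
    show "Des (a # K) \<subseteq> insert a ((+) a ` Des K)"
    proof
      fix x assume "x \<in> Des (a # K)"
      then obtain i where i: "1 \<le> i" "i < Suc (length K)" "x = sum_list (take i (a # K))" unfolding Des_def by auto
      show "x \<in> insert a ((+) a ` Des K)"
      proof (cases "i = 1")
        case True then show ?thesis using i by simp
      next
        case False
        then obtain i' where "i = Suc i'" "1 \<le> i'" "i' < length K" using i by (cases i) auto
        then show ?thesis using i unfolding Des_def by auto
      qed
    qed
    show "insert a ((+) a ` Des K) \<subseteq> Des (a # K)"
    proof
      fix x assume "x \<in> insert a ((+) a ` Des K)"
      then consider "x = a" | i where "1 \<le> i" "i < length K" "x = a + sum_list (take i K)" unfolding Des_def by auto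
      then show "x \<in> Des (a # K)"
      proof cases
        case 1
        then have "x = sum_list (take 1 (a # K))" by simp
        then show ?thesis unfolding Des_def using False by fastforce
      next
        case (2 i)
        then have "x = sum_list (take (Suc i) (a # K))" by simp
        then show ?thesis unfolding Des_def using 2 by fastforce
      qed
    qed
  qed
  then show ?thesis using False by simp
qed

lemma Des_bound:
  assumes "\<forall>x\<in>set K. 0 < x" "d \<in> Des K"
  shows "0 < d \<and> d < sum_list K"
proof -
  obtain i where i: "1 \<le> i" "i < length K" "d = sum_list (take i K)" using assms(2) unfolding Des_def by auto
  obtain x K2 where K: "K = x # K2" using i by (cases K) auto
  have "take i K = x # take (i - 1) K2" using K i by (cases i) auto
  then have "x \<le> d" using i by simp
  moreover have "x > 0" using assms(1) K by auto
  moreover have "hd (drop i K) \<in> set (drop i K)" using i by (simp add: hd_in_set)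
  then have "hd (drop i K) \<le> sum_list (drop i K)" "0 < hd (drop i K)"
    using assms(1) by (auto simp: member_le_sum_list dest: in_set_dropD)
  moreover have "sum_list K = sum_list (take i K) + sum_list (drop i K)"
    by (metis append_take_drop_id sum_list_append)
  ultimately show ?thesis using i by auto
qed

lemma Des_sub: "K \<in> compositions n \<Longrightarrow> Des K \<subseteq> {1..<n}"
  unfolding compositions_def using Des_bound by fastforce

lemma Des_inj_aux:
  "\<forall>x\<in>set K. 0 < x \<Longrightarrow> \<forall>x\<in>set K'. 0 < x \<Longrightarrow> sum_list K = sum_list K' \<Longrightarrow> Des K = Des K' \<Longrightarrow> K = K'"
proof (induction K arbitrary: K')
  case Nil
  then show ?case by (cases K') auto
next
  case (Cons a K1)
  obtain b K1' where K': "K' = b # K1'"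
    using Cons.prems by (cases K') auto
  have DD: "Des (a # K1) = Des (b # K1')" using Cons.prems(4) K' by simp
  have pa: "0 < a" "\<forall>x\<in>set K1. 0 < x" using Cons.prems(1) by auto
  have pb: "0 < b" "\<forall>x\<in>set K1'. 0 < x" using Cons.prems(2) K' by auto
  have ss: "a + sum_list K1 = b + sum_list K1'" using Cons.prems(3) K' by simp
  have D1: "Des (a # K1) = (if K1 = [] then {} else insert a ((+) a ` Des K1))" by (rule Des_Cons)
  have D2: "Des (b # K1') = (if K1' = [] then {} else insert b ((+) b ` Des K1'))" by (rule Des_Cons)
  show ?case
  proof (cases "K1 = []")
    case True
    then have "K1' = []" using DD D1 D2 by (cases "K1' = []") auto
    then show ?thesis using True K' ss by simp
  next
    case False
    have ne: "K1' \<noteq> []"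
    proof
      assume "K1' = []"
      then show False using DD D1 D2 False by simp
    qed
    have p1: "\<forall>x\<in>Des K1. 0 < x" using Des_bound[OF pa(2)] by blast
    have p2: "\<forall>x\<in>Des K1'. 0 < x" using Des_bound[OF pb(2)] by blast
    have e: "insert a ((+) a ` Des K1) = insert b ((+) b ` Des K1')"
      using DD D1 D2 False ne by simp
    have "a \<in> insert b ((+) b ` Des K1')" using e by blast
    then have "b \<le> a" by auto
    moreover have "b \<in> insert a ((+) a ` Des K1)" using e by blast
    then have "a \<le> b" by auto
    ultimately have ab: "a = b" by simp
    have "(+) a ` Des K1 = (+) a ` Des K1'"
    proof -
      have n1: "a \<notin> (+) a ` Des K1" "a \<notin> (+) a ` Des K1'" using p1 p2 by auto
      have "insert a ((+) a ` Des K1) = insert a ((+) a ` Des K1')" using e ab by simp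
      then show ?thesis using n1 by (metis Diff_insert_absorb)
    qed
    then have "Des K1 = Des K1'" by (simp add: inj_image_eq_iff)
    then have "K1 = K1'" using Cons.IH[OF pa(2) pb(2)] ss ab by simp
    then show ?thesis using K' ab by simp
  qed
qed

lemma Des_surj: "1 \<le> n \<Longrightarrow> E \<subseteq> {1..<n} \<Longrightarrow> \<exists>K\<in>compositions n. Des K = E"
proof (induction n arbitrary: E rule: less_induct)
  case (less n)
  show ?case
  proof (cases "E = {}")
    case True
    then show ?thesis using less.prems by (intro bexI[of _ "[n]"]) (auto simp: compositions_def Des_def)
  next
    case False
    define a where "a = Min E"
    have fin: "finite E" using less.prems finite_subset by auto
    have aE: "a \<in> E" using fin False a_def by simp
    have amin: "\<forall>x\<in>E. a \<le> x" using fin a_def by simp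
    have a1: "1 \<le> a" "a < n" using aE less.prems by auto
    define E' where "E' = (\<lambda>x. x - a) ` (E - {a})"
    have E'sub: "E' \<subseteq> {1..<n - a}"
    proof
      fix y assume "y \<in> E'"
      then obtain x where x: "x \<in> E" "x \<noteq> a" "y = x - a" unfolding E'_def by auto
      have "a \<le> x" "x < n" using amin x less.prems(2) by auto
      then show "y \<in> {1..<n - a}" using x by auto
    qed
    have "\<exists>K\<in>compositions (n - a). Des K = E'" using less.IH[of "n - a" E'] a1 E'sub by auto
    then obtain K1 where K1: "K1 \<in> compositions (n - a)" "Des K1 = E'" by blast
    have K1ne: "K1 \<noteq> []" using K1 a1 unfolding compositions_def by auto
    have "Des (a # K1) = insert a ((+) a ` E')" using K1ne K1 Des_Cons by simp
    also have "(+) a ` E' = E - {a}"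
    proof -
      have "(+) a ` E' = (\<lambda>x. a + (x - a)) ` (E - {a})" unfolding E'_def by (simp add: image_image)
      also have "\<dots> = (\<lambda>x. x) ` (E - {a})" using amin by (intro image_cong) auto
      also have "\<dots> = E - {a}" by simp
      finally show ?thesis .
    qed
    finally have "Des (a # K1) = E" using aE by auto
    moreover have "a # K1 \<in> compositions n" using K1 a1 unfolding compositions_def by auto
    ultimately show ?thesis by blast
  qed
qed

lemma Des_bij: "1 \<le> n \<Longrightarrow> bij_betw Des (compositions n) {E. E \<subseteq> {1..<n}}"
  unfolding bij_betw_def
proof
  show "inj_on Des (compositions n)" unfolding inj_on_def compositions_def using Des_inj_aux by auto
  assume "1 \<le> n"
  show "Des ` compositions n = {E. E \<subseteq> {1..<n}}"
  proof
    show "Des ` compositions n \<subseteq> {E. E \<subseteq> {1..<n}}" using Des_sub by blast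
    show "{E. E \<subseteq> {1..<n}} \<subseteq> Des ` compositions n"
    proof
      fix E assume "E \<in> {E. E \<subseteq> {1..<n}}"
      then obtain K where "K \<in> compositions n" "Des K = E" using Des_surj[OF \<open>1 \<le> n\<close>] by blast
      then show "E \<in> Des ` compositions n" by blast
    qed
  qed
qed

lemma finite_compositions: "1 \<le> n \<Longrightarrow> finite (compositions n)"
proof -
  assume n: "1 \<le> n"
  have "{E. E \<subseteq> {1..<n}} = Pow {1..<n}" by auto
  then have "finite {E. E \<subseteq> {1..<n}}" by simp
  then show ?thesis using bij_betw_finite[OF Des_bij[OF n]] by simp
qed


definition Fset :: "nat \<Rightarrow> (nat \<Rightarrow> nat) \<Rightarrow> (nat \<Rightarrow> nat) set" where
  "Fset n \<alpha> = {f. (\<forall>j. j \<notin> {1..n} \<longrightarrow> f j = 0) \<and> (\<forall>j\<in>{1..<n}. f j \<le> f (j + 1))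
      \<and> (\<forall>v. \<alpha> v = card {j \<in> {1..n}. f j = v})}"

definition Sof :: "nat \<Rightarrow> (nat \<Rightarrow> nat) \<Rightarrow> nat set" where
  "Sof n f = {j \<in> {1..<n}. f j < f (j + 1)}"

lemma Fset_unique: "f \<in> Fset n \<alpha> \<Longrightarrow> g \<in> Fset n \<alpha> \<Longrightarrow> f = g"
proof
  fix j assume f: "f \<in> Fset n \<alpha>" and g: "g \<in> Fset n \<alpha>"
  show "f j = g j"
  proof (cases "j \<in> {1..n}")
    case True
    show ?thesis
      by (rule sorted_unique[of n f g]) (use f g True in \<open>auto simp: Fset_def\<close>)
  next
    case False then show ?thesis using f g unfolding Fset_def by auto
  qed
qed

lemma Fq_set:
  assumes K: "K \<in> compositions n"
  shows "Fq K \<alpha> = real (card {f \<in> Fset n \<alpha>. \<forall>j\<in>Des K. f j < f (j + 1)})"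
proof -
  have sK: "sum_list K = n" using K unfolding compositions_def by auto
  have D: "Des K \<subseteq> {1..<n}" using Des_sub[OF K] .
  have "{f :: nat \<Rightarrow> nat.
      (\<forall>j. j \<notin> {1..sum_list K} \<longrightarrow> f j = 0)
    \<and> (\<forall>j \<in> {1..<sum_list K}. f j \<le> f (j + 1) \<and> (j \<in> Des K \<longrightarrow> f j < f (j + 1)))
    \<and> (\<forall>v. \<alpha> v = card {j \<in> {1..sum_list K}. f j = v})} = {f \<in> Fset n \<alpha>. \<forall>j\<in>Des K. f j < f (j + 1)}"
    unfolding sK Fset_def using D by auto
  then show ?thesis unfolding Fq_def by simp
qed

lemma Fq_eval:
  assumes K: "K \<in> compositions n" and f0: "f0 \<in> Fset n \<alpha>"
  shows "Fq K \<alpha> = (if Des K \<subseteq> Sof n f0 then 1 else 0)"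
proof -
  have D: "Des K \<subseteq> {1..<n}" using Des_sub[OF K] .
  have "{f \<in> Fset n \<alpha>. \<forall>j\<in>Des K. f j < f (j + 1)} = (if Des K \<subseteq> Sof n f0 then {f0} else {})"
  proof (cases "Des K \<subseteq> Sof n f0")
    case True
    then have "\<forall>j\<in>Des K. f0 j < f0 (j + 1)" unfolding Sof_def by auto
    then have "{f \<in> Fset n \<alpha>. \<forall>j\<in>Des K. f j < f (j + 1)} = {f0}"
      using Fset_unique[OF f0] f0 by blast
    then show ?thesis using True by simp
  next
    case False
    then obtain j where j: "j \<in> Des K" "\<not> f0 j < f0 (j + 1)" using D unfolding Sof_def by auto
    then have "{f \<in> Fset n \<alpha>. \<forall>j\<in>Des K. f j < f (j + 1)} = {}"
      using Fset_unique[OF f0] by blast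
    then show ?thesis using False by simp
  qed
  then show ?thesis using Fq_set[OF K] by simp
qed

lemma Fq_empty:
  assumes K: "K \<in> compositions n" and "Fset n \<alpha> = {}"
  shows "Fq K \<alpha> = 0"
  using Fq_set[OF K] assms by simp

lemma Qcond_iff:
  fixes Q E :: "nat set"
  assumes "0 \<notin> Q"
  shows "Q \<subseteq> (E - (\<lambda>a. a + 1) ` E) \<union> ((\<lambda>a. a + 1) ` E - E) \<longleftrightarrow> (\<forall>q\<in>Q. q \<in> E \<longleftrightarrow> q - 1 \<notin> E)"
proof -
  have "q \<in> (\<lambda>a. a + 1) ` E \<longleftrightarrow> q - 1 \<in> E" if "q \<in> Q" for q
  proof -
    have "q \<noteq> 0" using that assms by (metis gr0I)
    show ?thesis
    proof
      assume "q \<in> (\<lambda>a. a + 1) ` E"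
      then obtain a where "a \<in> E" "q = a + 1" by blast
      then show "q - 1 \<in> E" by simp
    next
      assume "q - 1 \<in> E"
      moreover have "q = (q - 1) + 1" using \<open>q \<noteq> 0\<close> by simp
      ultimately show "q \<in> (\<lambda>a. a + 1) ` E" by (metis image_eqI)
    qed
  qed
  then show ?thesis by blast
qed

lemma Theta_eval:
  assumes n: "1 \<le> n" and f0: "f0 \<in> Fset n \<alpha>" and Q: "0 \<notin> Q"
  shows "Theta n Q \<alpha> = 2 ^ (card Q + 1) * real (card (Rset (Sof n f0) Q))"
proof -
  define Kset where "Kset = {K \<in> compositions n.
                Q \<subseteq> (Des K - (\<lambda>a. a + 1) ` Des K) \<union> ((\<lambda>a. a + 1) ` Des K - Des K)}"
  have finK: "finite Kset" unfolding Kset_def using finite_compositions[OF n] by auto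
  have "(\<Sum>K\<in>Kset. Fq K \<alpha>) = (\<Sum>K\<in>Kset. if Des K \<subseteq> Sof n f0 then 1 else 0)"
    using Fq_eval[OF _ f0] unfolding Kset_def by (intro sum.cong) auto
  also have "\<dots> = real (card {K\<in>Kset. Des K \<subseteq> Sof n f0})"
    using finK by (simp add: sum.If_cases Int_def)
  also have "card {K\<in>Kset. Des K \<subseteq> Sof n f0} = card (Rset (Sof n f0) Q)"
  proof -
    have inj: "inj_on Des {K\<in>Kset. Des K \<subseteq> Sof n f0}"
      using Des_bij[OF n] unfolding bij_betw_def Kset_def by (auto intro: inj_on_subset)
    have "Des ` {K\<in>Kset. Des K \<subseteq> Sof n f0} = Rset (Sof n f0) Q"
    proof
      show "Des ` {K\<in>Kset. Des K \<subseteq> Sof n f0} \<subseteq> Rset (Sof n f0) Q"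
      proof
        fix E assume "E \<in> Des ` {K\<in>Kset. Des K \<subseteq> Sof n f0}"
        then obtain K where K: "K \<in> Kset" "Des K \<subseteq> Sof n f0" "E = Des K" by blast
        then show "E \<in> Rset (Sof n f0) Q" unfolding Kset_def Rset_def using Qcond_iff[OF Q, of E] by simp
      qed
      show "Rset (Sof n f0) Q \<subseteq> Des ` {K\<in>Kset. Des K \<subseteq> Sof n f0}"
      proof
        fix E assume E: "E \<in> Rset (Sof n f0) Q"
        then have "E \<subseteq> {1..<n}" unfolding Rset_def Sof_def by auto
        then obtain K where K: "K \<in> compositions n" "Des K = E" using Des_surj[OF n] by blast
        then have "K \<in> {K\<in>Kset. Des K \<subseteq> Sof n f0}"
          using E Qcond_iff[OF Q, of E] unfolding Kset_def Rset_def by auto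
        then show "E \<in> Des ` {K\<in>Kset. Des K \<subseteq> Sof n f0}" using K by blast
      qed
    qed
    then show ?thesis using card_image[OF inj] by simp
  qed
  finally show ?thesis unfolding Theta_def Kset_def by simp
qed

lemma Theta_empty:
  assumes n: "1 \<le> n" and "Fset n \<alpha> = {}"
  shows "Theta n Q \<alpha> = 0"
proof -
  have "(\<Sum>K \<in> {K \<in> compositions n.
                Q \<subseteq> (Des K - (\<lambda>a. a + 1) ` Des K) \<union> ((\<lambda>a. a + 1) ` Des K - Des K)}.
        Fq K \<alpha>) = 0"
    by (rule sum.neutral) (use Fq_empty assms(2) in blast)
  then show ?thesis unfolding Theta_def by simp
qed


definition Wset :: "nat \<Rightarrow> nat set \<Rightarrow> (nat \<Rightarrow> nat) \<Rightarrow> (nat \<Rightarrow> nat) set" where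
  "Wset n D \<alpha> = {w. (\<forall>j. j \<notin> {1..n} \<longrightarrow> w j = 0) \<and> (\<forall>j\<in>{1..n}. 0 < w j)
     \<and> (\<forall>j\<in>{1..<n}. w j \<le> w (j + 1) \<and> (w j = w (j + 1) \<longrightarrow> (even (w j) \<longleftrightarrow> j \<notin> D)))
     \<and> (\<forall>v. \<alpha> v = card {j \<in> {1..n}. (w j - 1) div 2 = v})}"

definition wA :: "nat \<Rightarrow> (nat \<Rightarrow> nat) \<Rightarrow> nat set \<Rightarrow> nat \<Rightarrow> nat" where
  "wA n f0 A = (\<lambda>j. if j \<in> {1..n} then 2 * f0 j + (if j \<in> A then 1 else 2) else 0)"

lemma ar1: "0 < (w::nat) \<Longrightarrow> w = 2 * ((w - 1) div 2) + (if odd w then 1 else 2)"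
  by (cases "odd w") (auto elim!: oddE evenE)

lemma ar2: "(2 * (f::nat) + (if b then 1 else 2) - 1) div 2 = f"
  by (cases b) auto

lemma wA_inj: "inj_on (wA n f0) (Pow {1..n})"
proof (rule inj_onI)
  fix A B assume A: "A \<in> Pow {1..n}" and B: "B \<in> Pow {1..n}" and e: "wA n f0 A = wA n f0 B"
  show "A = B"
  proof
    show "A \<subseteq> B"
    proof
      fix j assume j: "j \<in> A"
      then have "j \<in> {1..n}" using A by auto
      then have "wA n f0 A j = 2 * f0 j + 1" using j unfolding wA_def by simp
      then have "wA n f0 B j = 2 * f0 j + 1" using e by simp
      moreover have "wA n f0 B j = 2 * f0 j + (if j \<in> B then 1 else 2)" using \<open>j \<in> {1..n}\<close> unfolding wA_def by simp
      ultimately have "(if j \<in> B then 1 else 2) = (1::nat)" by linarith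
      then show "j \<in> B" by (cases "j \<in> B") auto
    qed
    show "B \<subseteq> A"
    proof
      fix j assume j: "j \<in> B"
      then have "j \<in> {1..n}" using B by auto
      then have "wA n f0 B j = 2 * f0 j + 1" using j unfolding wA_def by simp
      then have "wA n f0 A j = 2 * f0 j + 1" using e by simp
      moreover have "wA n f0 A j = 2 * f0 j + (if j \<in> A then 1 else 2)" using \<open>j \<in> {1..n}\<close> unfolding wA_def by simp
      ultimately have "(if j \<in> A then 1 else 2) = (1::nat)" by linarith
      then show "j \<in> A" by (cases "j \<in> A") auto
    qed
  qed
qed

lemma W_empty:
  assumes "Fset n \<alpha> = {}"
  shows "Wset n D \<alpha> = {}"
proof (rule ccontr)
  assume "Wset n D \<alpha> \<noteq> {}"
  then obtain w where w: "w \<in> Wset n D \<alpha>" by blast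
  define f where "f j = (if j \<in> {1..n} then (w j - 1) div 2 else 0)" for j
  have "f \<in> Fset n \<alpha>"
  proof -
    have "\<forall>j\<in>{1..<n}. f j \<le> f (j + 1)"
    proof
      fix j assume j: "j \<in> {1..<n}"
      then have "w j \<le> w (j + 1)" using w unfolding Wset_def by auto
      then show "f j \<le> f (j + 1)" using j unfolding f_def by (auto intro: div_le_mono)
    qed
    moreover have "\<forall>v. \<alpha> v = card {j \<in> {1..n}. f j = v}"
    proof
      fix v
      have "{j \<in> {1..n}. f j = v} = {j \<in> {1..n}. (w j - 1) div 2 = v}" unfolding f_def by auto
      moreover have "\<alpha> v = card {j \<in> {1..n}. (w j - 1) div 2 = v}" using w unfolding Wset_def by blast
      ultimately show "\<alpha> v = card {j \<in> {1..n}. f j = v}" by simp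
    qed
    moreover have "\<forall>j. j \<notin> {1..n} \<longrightarrow> f j = 0" unfolding f_def by auto
    ultimately show ?thesis unfolding Fset_def by blast
  qed
  then show False using assms by auto
qed

lemma W_image:
  assumes f0: "f0 \<in> Fset n \<alpha>"
  shows "Wset n D \<alpha> = wA n f0 ` {A. A \<subseteq> {1..n} \<and> Valid n (Sof n f0) D A}"
proof
  have f0z: "\<forall>j. j \<notin> {1..n} \<longrightarrow> f0 j = 0" and f0m: "\<forall>j\<in>{1..<n}. f0 j \<le> f0 (j + 1)"
    and f0c: "\<forall>v. \<alpha> v = card {j \<in> {1..n}. f0 j = v}" using f0 unfolding Fset_def by auto
  show "Wset n D \<alpha> \<subseteq> wA n f0 ` {A. A \<subseteq> {1..n} \<and> Valid n (Sof n f0) D A}"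
  proof
    fix w assume w: "w \<in> Wset n D \<alpha>"
    have wz: "\<forall>j. j \<notin> {1..n} \<longrightarrow> w j = 0" and wp: "\<forall>j\<in>{1..n}. 0 < w j"
      and wm: "\<forall>j\<in>{1..<n}. w j \<le> w (j + 1) \<and> (w j = w (j + 1) \<longrightarrow> (even (w j) \<longleftrightarrow> j \<notin> D))"
      and wc: "\<forall>v. \<alpha> v = card {j \<in> {1..n}. (w j - 1) div 2 = v}" using w unfolding Wset_def by auto
    define f where "f j = (if j \<in> {1..n} then (w j - 1) div 2 else 0)" for j
    have "f \<in> Fset n \<alpha>"
    proof -
      have "\<forall>j\<in>{1..<n}. f j \<le> f (j + 1)"
      proof
        fix j assume j: "j \<in> {1..<n}"
        then have "w j \<le> w (j + 1)" using wm by auto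
        then show "f j \<le> f (j + 1)" using j unfolding f_def by (auto intro: div_le_mono)
      qed
      moreover have "\<forall>v. \<alpha> v = card {j \<in> {1..n}. f j = v}"
      proof
        fix v
        have "{j \<in> {1..n}. f j = v} = {j \<in> {1..n}. (w j - 1) div 2 = v}" unfolding f_def by auto
        then show "\<alpha> v = card {j \<in> {1..n}. f j = v}" using wc by simp
      qed
      moreover have "\<forall>j. j \<notin> {1..n} \<longrightarrow> f j = 0" unfolding f_def by auto
    ultimately show ?thesis unfolding Fset_def by blast
    qed
    then have ff0: "f = f0" using Fset_unique f0 by blast
    have fj: "(w j - 1) div 2 = f0 j" if "j \<in> {1..n}" for j
    proof -
      have "f j = (w j - 1) div 2" using that unfolding f_def by simp
      then show ?thesis using ff0 by simp
    qed
    define A where "A = {j\<in>{1..n}. odd (w j)}"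
    have wform: "w j = 2 * f0 j + (if j \<in> A then 1 else 2)" if j: "j \<in> {1..n}" for j
      using ar1[of "w j"] wp j fj[OF j] unfolding A_def by auto
    have "w = wA n f0 A"
    proof
      fix j show "w j = wA n f0 A j"
        using wform wz unfolding wA_def by auto
    qed
    moreover have "Valid n (Sof n f0) D A"
      unfolding Valid_def
    proof (intro ballI impI)
      fix j assume j: "j \<in> {1..<n}" and nS: "j \<notin> Sof n f0"
      have jj: "j \<in> {1..n}" "j + 1 \<in> {1..n}" using j by auto
      have eqf: "f0 j = f0 (j + 1)" using f0m j nS unfolding Sof_def by force
      have w1: "w j = 2 * f0 j + (if j \<in> A then 1 else 2)" using wform[OF jj(1)] .
      have w2: "w (j + 1) = 2 * f0 j + (if j + 1 \<in> A then 1 else 2)" using wform[OF jj(2)] eqf by simp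
      have le: "w j \<le> w (j + 1)" and ev: "w j = w (j + 1) \<longrightarrow> (even (w j) \<longleftrightarrow> j \<notin> D)" using wm j by auto
      show "(j + 1 \<in> A \<longrightarrow> j \<in> A) \<and> ((j \<in> A \<longleftrightarrow> j + 1 \<in> A) \<longrightarrow> (j \<in> A \<longleftrightarrow> j \<in> D))"
        using le ev w1 w2 by (auto split: if_splits)
    qed
    moreover have "A \<subseteq> {1..n}" unfolding A_def by auto
    ultimately show "w \<in> wA n f0 ` {A. A \<subseteq> {1..n} \<and> Valid n (Sof n f0) D A}" by blast
  qed
  show "wA n f0 ` {A. A \<subseteq> {1..n} \<and> Valid n (Sof n f0) D A} \<subseteq> Wset n D \<alpha>"
  proof
    fix w assume "w \<in> wA n f0 ` {A. A \<subseteq> {1..n} \<and> Valid n (Sof n f0) D A}"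
    then obtain A where A: "A \<subseteq> {1..n}" "Valid n (Sof n f0) D A" and wdef: "w = wA n f0 A" by blast
    have wj: "w j = 2 * f0 j + (if j \<in> A then 1 else 2)" if "j \<in> {1..n}" for j
      using that unfolding wdef wA_def by simp
    have c1: "\<forall>j. j \<notin> {1..n} \<longrightarrow> w j = 0" unfolding wdef wA_def by simp
    have c2: "\<forall>j\<in>{1..n}. 0 < w j" using wj by simp
    have c3: "\<forall>j\<in>{1..<n}. w j \<le> w (j + 1) \<and> (w j = w (j + 1) \<longrightarrow> (even (w j) \<longleftrightarrow> j \<notin> D))"
    proof
      fix j assume j: "j \<in> {1..<n}"
      have jj: "j \<in> {1..n}" "j + 1 \<in> {1..n}" using j by auto
      have le: "f0 j \<le> f0 (j + 1)" using f0m j by auto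
      show "w j \<le> w (j + 1) \<and> (w j = w (j + 1) \<longrightarrow> (even (w j) \<longleftrightarrow> j \<notin> D))"
      proof (cases "f0 j < f0 (j + 1)")
        case True
        then have "w j < w (j + 1)" using wj[OF jj(1)] wj[OF jj(2)] by (auto split: if_splits)
        then show ?thesis by simp
      next
        case False
        then have eqf: "f0 (j + 1) = f0 j" using le by simp
        have "j \<notin> Sof n f0" using False unfolding Sof_def by auto
        then have V: "(j + 1 \<in> A \<longrightarrow> j \<in> A) \<and> ((j \<in> A \<longleftrightarrow> j + 1 \<in> A) \<longrightarrow> (j \<in> A \<longleftrightarrow> j \<in> D))"
          using A(2) j unfolding Valid_def by auto
        show ?thesis using V wj[OF jj(1)] wj[OF jj(2)] eqf by (auto split: if_splits)
      qed
    qed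
    have c4: "\<forall>v. \<alpha> v = card {j \<in> {1..n}. (w j - 1) div 2 = v}"
    proof
      fix v
      have "{j \<in> {1..n}. (w j - 1) div 2 = v} = {j \<in> {1..n}. f0 j = v}"
        using wj ar2 by auto
      then show "\<alpha> v = card {j \<in> {1..n}. (w j - 1) div 2 = v}" using f0c by simp
    qed
    show "w \<in> Wset n D \<alpha>" unfolding Wset_def using c1 c2 c3 c4 by blast
  qed
qed

lemma ENR:
  assumes n: "1 \<le> n" and D: "D \<subseteq> {1..<n}"
  shows "real (card (Wset n D \<alpha>)) = Theta n {i\<in>D. i \<noteq> 1 \<and> i - 1 \<notin> D} \<alpha>"
proof (cases "Fset n \<alpha> = {}")
  case True
  then show ?thesis using W_empty Theta_empty[OF n] by simp
next
  case False
  then obtain f0 where f0: "f0 \<in> Fset n \<alpha>" by blast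
  define S where "S = Sof n f0"
  define P where "P = {i\<in>D. i \<noteq> 1 \<and> i - 1 \<notin> D}"
  have S: "S \<subseteq> {1..<n}" unfolding S_def Sof_def by auto
  have "card (Wset n D \<alpha>) = card {A. A \<subseteq> {1..n} \<and> Valid n S D A}"
    unfolding W_image[OF f0] S_def by (rule card_image) (rule inj_on_subset[OF wA_inj], auto)
  also have "\<dots> = (if \<forall>p\<in>P. p \<in> S \<or> p - 1 \<in> S then 2 ^ (card S + 1) else 0)"
    unfolding P_def by (rule Valid_count[OF n S D])
  finally have L: "card (Wset n D \<alpha>) = (if \<forall>p\<in>P. p \<in> S \<or> p - 1 \<in> S then 2 ^ (card S + 1) else 0)" .
  have P0: "0 \<notin> P" unfolding P_def using D by auto
  have Pfin: "finite P"
  proof -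
    have "P \<subseteq> {1..<n}" using D unfolding P_def by auto
    then show ?thesis by (rule finite_subset) simp
  qed
  have Pc: "\<forall>p\<in>P. p + 1 \<notin> P" unfolding P_def by auto
  have R: "2 ^ card P * card (Rset S P) = (if \<forall>p\<in>P. p \<in> S \<or> p - 1 \<in> S then 2 ^ card S else 0)"
  proof -
    have "finite S" using S finite_subset by blast
    then show ?thesis using Rset_count[OF Pfin _ P0 Pc, of S] by simp
  qed
  have T: "Theta n P \<alpha> = 2 ^ (card P + 1) * real (card (Rset S P))"
    unfolding S_def by (rule Theta_eval[OF n f0 P0])
  have T2: "Theta n P \<alpha> = 2 * real (2 ^ card P * card (Rset S P))" unfolding T by simp
  show ?thesis unfolding P_def[symmetric] T2 R L by simp
qed


lemma lam_gap:
  assumes s: "sorted_wrt (>) lam" and r: "r1 \<le> r2" "r2 < length lam"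
  shows "r2 + lam ! r2 \<le> r1 + lam ! r1"
proof -
  have "\<forall>k. r1 + k < length lam \<longrightarrow> r1 + k + lam ! (r1 + k) \<le> r1 + lam ! r1"
  proof
    fix k show "r1 + k < length lam \<longrightarrow> r1 + k + lam ! (r1 + k) \<le> r1 + lam ! r1"
    proof (induction k)
      case 0 then show ?case by simp
    next
      case (Suc k)
      show ?case
      proof
        assume a: "r1 + Suc k < length lam"
        have "lam ! (r1 + Suc k) < lam ! (r1 + k)"
          using s a unfolding sorted_wrt_iff_nth_less by auto
        then show "r1 + Suc k + lam ! (r1 + Suc k) \<le> r1 + lam ! r1" using Suc a by simp
      qed
    qed
  qed
  then have "r1 + (r2 - r1) < length lam \<longrightarrow> r1 + (r2 - r1) + lam ! (r1 + (r2 - r1)) \<le> r1 + lam ! r1" by blast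
  then show ?thesis using r by simp
qed

definition wmono :: "nat list \<Rightarrow> (nat \<times> nat \<Rightarrow> nat) \<Rightarrow> bool" where
  "wmono lam T \<longleftrightarrow> (\<forall>r c. (r, c) \<in> shifted_diagram lam \<and> (r, c + 1) \<in> shifted_diagram lam \<longrightarrow> T (r, c) \<le> T (r, c + 1))
     \<and> (\<forall>r c. (r, c) \<in> shifted_diagram lam \<and> (r + 1, c) \<in> shifted_diagram lam \<longrightarrow> T (r, c) \<le> T (r + 1, c))"

lemma diag_iff: "(r, c) \<in> shifted_diagram lam \<longleftrightarrow> r < length lam \<and> r \<le> c \<and> c < r + lam ! r"
  unfolding shifted_diagram_def by auto

lemma col_interval:
  assumes s: "sorted_wrt (>) lam" and "(r1, c) \<in> shifted_diagram lam" "(r2, c) \<in> shifted_diagram lam" "r1 \<le> r" "r \<le> r2"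
  shows "(r, c) \<in> shifted_diagram lam"
proof -
  have "r2 + lam ! r2 \<le> r + lam ! r" using lam_gap[OF s, of r r2] assms by (auto simp: diag_iff)
  then show ?thesis using assms by (auto simp: diag_iff)
qed

lemma rect:
  assumes s: "sorted_wrt (>) lam" and "(r1, c1) \<in> shifted_diagram lam" "(r2, c2) \<in> shifted_diagram lam" "r1 \<le> r2" "c1 \<le> c2"
  shows "(r1, c2) \<in> shifted_diagram lam"
proof -
  have "r2 + lam ! r2 \<le> r1 + lam ! r1" using lam_gap[OF s, of r1 r2] assms by (auto simp: diag_iff)
  then show ?thesis using assms by (auto simp: diag_iff)
qed

lemma wmono_le:
  assumes s: "sorted_wrt (>) lam" and m: "wmono lam T"
    and x: "(r1, c1) \<in> shifted_diagram lam" and y: "(r2, c2) \<in> shifted_diagram lam"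
    and le: "r1 \<le> r2" "c1 \<le> c2"
  shows "T (r1, c1) \<le> T (r1, c2) \<and> T (r1, c2) \<le> T (r2, c2)"
proof -
  have z: "(r1, c2) \<in> shifted_diagram lam" using rect[OF s x y le] .
  have "\<forall>k. c1 + k \<le> c2 \<longrightarrow> T (r1, c1) \<le> T (r1, c1 + k)"
  proof
    fix k show "c1 + k \<le> c2 \<longrightarrow> T (r1, c1) \<le> T (r1, c1 + k)"
    proof (induction k)
      case 0 then show ?case by simp
    next
      case (Suc k)
      show ?case
      proof
        assume a: "c1 + Suc k \<le> c2"
        have "(r1, c1 + k) \<in> shifted_diagram lam" "(r1, c1 + k + 1) \<in> shifted_diagram lam"
          using x z a by (auto simp: diag_iff)
        then have "T (r1, c1 + k) \<le> T (r1, c1 + k + 1)" using m unfolding wmono_def by blast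
        then show "T (r1, c1) \<le> T (r1, c1 + Suc k)" using Suc a by simp
      qed
    qed
  qed
  then have "c1 + (c2 - c1) \<le> c2 \<longrightarrow> T (r1, c1) \<le> T (r1, c1 + (c2 - c1))" by blast
  then have A: "T (r1, c1) \<le> T (r1, c2)" using le by simp
  have "\<forall>k. r1 + k \<le> r2 \<longrightarrow> T (r1, c2) \<le> T (r1 + k, c2)"
  proof
    fix k show "r1 + k \<le> r2 \<longrightarrow> T (r1, c2) \<le> T (r1 + k, c2)"
    proof (induction k)
      case 0 then show ?case by simp
    next
      case (Suc k)
      show ?case
      proof
        assume a: "r1 + Suc k \<le> r2"
        have "(r1 + k, c2) \<in> shifted_diagram lam" "(r1 + k + 1, c2) \<in> shifted_diagram lam"
          using col_interval[OF s z y] a by auto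
        then have "T (r1 + k, c2) \<le> T (r1 + k + 1, c2)" using m unfolding wmono_def by blast
        then show "T (r1, c2) \<le> T (r1 + Suc k, c2)" using Suc a by simp
      qed
    qed
  qed
  then have "r1 + (r2 - r1) \<le> r2 \<longrightarrow> T (r1, c2) \<le> T (r1 + (r2 - r1), c2)" by blast
  then have B: "T (r1, c2) \<le> T (r2, c2)" using le by simp
  show ?thesis using A B by simp
qed

lemma wmono_le2:
  assumes s: "sorted_wrt (>) lam" and m: "wmono lam T"
    and x: "x \<in> shifted_diagram lam" and y: "y \<in> shifted_diagram lam"
    and le: "fst x \<le> fst y" "snd x \<le> snd y"
  shows "T x \<le> T y"
  using wmono_le[OF s m, of "fst x" "snd x" "fst y" "snd y"] assms by auto

lemma finite_diag: "finite (shifted_diagram lam)"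
proof -
  have "shifted_diagram lam \<subseteq> {..<length lam} \<times> {..<length lam + sum_list lam}"
  proof
    fix p assume p: "p \<in> shifted_diagram lam"
    obtain r c where rc: "p = (r, c)" by fastforce
    have "lam ! r \<le> sum_list lam" using p rc by (auto simp: diag_iff member_le_sum_list)
    then show "p \<in> {..<length lam} \<times> {..<length lam + sum_list lam}" using p rc by (auto simp: diag_iff)
  qed
  then show ?thesis by (rule finite_subset) auto
qed

lemma card_diag: "card (shifted_diagram lam) = sum_list lam"
proof -
  have "shifted_diagram lam = Sigma {..<length lam} (\<lambda>r. {r..<r + lam ! r})"
    unfolding shifted_diagram_def by auto
  then have "card (shifted_diagram lam) = (\<Sum>r<length lam. card {r..<r + lam ! r})" by simp
  also have "\<dots> = (\<Sum>r<length lam. lam ! r)" by simp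
  also have "\<dots> = sum_list lam" by (simp add: sum_list_sum_nth atLeast0LessThan)
  finally show ?thesis .
qed

lemma chain_le:
  fixes g :: "nat \<Rightarrow> nat"
  assumes a: "\<forall>k. i \<le> k \<and> k < j \<longrightarrow> g (k + 1) \<le> g k" and ij: "i \<le> j"
  shows "g j \<le> g i"
proof -
  have "\<forall>d. i + d \<le> j \<longrightarrow> g (i + d) \<le> g i"
  proof
    fix d show "i + d \<le> j \<longrightarrow> g (i + d) \<le> g i"
    proof (induction d)
      case 0 then show ?case by simp
    next
      case (Suc d)
      show ?case
      proof
        assume b: "i + Suc d \<le> j"
        then have "g (i + d + 1) \<le> g (i + d)" using a by simp
        then show "g (i + Suc d) \<le> g i" using Suc b by simp
      qed
    qed
  qed
  then have "i + (j - i) \<le> j \<longrightarrow> g (i + (j - i)) \<le> g i" by blast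
  then show ?thesis using ij by simp
qed

lemma chain_lt:
  fixes g :: "nat \<Rightarrow> nat"
  assumes a: "\<forall>k. i \<le> k \<and> k < j \<longrightarrow> g k < g (k + 1)" and ij: "i < j"
  shows "g i < g j"
proof -
  have "\<forall>d. i + Suc d \<le> j \<longrightarrow> g i < g (i + Suc d)"
  proof
    fix d show "i + Suc d \<le> j \<longrightarrow> g i < g (i + Suc d)"
    proof (induction d)
      case 0 then show ?case using a by auto
    next
      case (Suc d)
      show ?case
      proof
        assume b: "i + Suc (Suc d) \<le> j"
        then have "g (i + Suc d) < g (i + Suc d + 1)" using a by simp
        then show "g i < g (i + Suc (Suc d))" using Suc b by simp
      qed
    qed
  qed
  then have "i + Suc (j - i - 1) \<le> j \<longrightarrow> g i < g (i + Suc (j - i - 1))" by blast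
  then show ?thesis using ij by simp
qed

lemma rank_bij:
  assumes fin: "finite A"
    and irr: "\<And>x. x \<in> A \<Longrightarrow> \<not> R x x"
    and tr: "\<And>x y z. x \<in> A \<Longrightarrow> y \<in> A \<Longrightarrow> z \<in> A \<Longrightarrow> R x y \<Longrightarrow> R y z \<Longrightarrow> R x z"
    and tot: "\<And>x y. x \<in> A \<Longrightarrow> y \<in> A \<Longrightarrow> x \<noteq> y \<Longrightarrow> R x y \<or> R y x"
  shows "bij_betw (\<lambda>x. card {y\<in>A. R y x} + 1) A {1..card A}"
    and "\<And>x y. x \<in> A \<Longrightarrow> y \<in> A \<Longrightarrow> R x y \<Longrightarrow> card {z\<in>A. R z x} + 1 < card {z\<in>A. R z y} + 1"
proof -
  have mono: "card {z\<in>A. R z x} < card {z\<in>A. R z y}" if xy: "x \<in> A" "y \<in> A" "R x y" for x y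
  proof -
    have "{z\<in>A. R z x} \<subset> {z\<in>A. R z y}"
    proof
      show "{z\<in>A. R z x} \<subseteq> {z\<in>A. R z y}" using tr xy by blast
      show "{z\<in>A. R z x} \<noteq> {z\<in>A. R z y}" using xy irr by blast
    qed
    then show ?thesis using fin by (intro psubset_card_mono) auto
  qed
  then show "\<And>x y. x \<in> A \<Longrightarrow> y \<in> A \<Longrightarrow> R x y \<Longrightarrow> card {z\<in>A. R z x} + 1 < card {z\<in>A. R z y} + 1" by simp
  let ?f = "\<lambda>x. card {y\<in>A. R y x} + 1"
  have inj: "inj_on ?f A"
  proof (rule inj_onI)
    fix x y assume "x \<in> A" "y \<in> A" "?f x = ?f y"
    show "x = y"
    proof (rule ccontr)
      assume "x \<noteq> y"
      then have "R x y \<or> R y x" using tot \<open>x \<in> A\<close> \<open>y \<in> A\<close> by blast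
      then show False using mono \<open>x \<in> A\<close> \<open>y \<in> A\<close> \<open>?f x = ?f y\<close> by fastforce
    qed
  qed
  have img: "?f ` A \<subseteq> {1..card A}"
  proof
    fix u assume "u \<in> ?f ` A"
    then obtain x where x: "x \<in> A" "u = ?f x" by blast
    have "{y\<in>A. R y x} \<subseteq> A - {x}" using irr x by auto
    then have "card {y\<in>A. R y x} \<le> card (A - {x})" using fin by (intro card_mono) auto
    also have "\<dots> = card A - 1" using x fin by simp
    finally have "card {y\<in>A. R y x} \<le> card A - 1" .
    moreover have "card A \<ge> 1" using x fin by (metis One_nat_def Suc_leI card_gt_0_iff empty_iff)
    ultimately show "u \<in> {1..card A}" using x by simp
  qed
  have "card (?f ` A) = card A" using card_image[OF inj] .
  then have "?f ` A = {1..card A}" using img by (intro card_subset_eq) auto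
  then show "bij_betw ?f A {1..card A}" using inj unfolding bij_betw_def by simp
qed


definition RT :: "(nat \<times> nat \<Rightarrow> nat) \<Rightarrow> nat \<times> nat \<Rightarrow> nat \<times> nat \<Rightarrow> bool" where
  "RT T x y \<longleftrightarrow> T x < T y \<or> (T x = T y \<and> even (T x) \<and> snd x < snd y) \<or> (T x = T y \<and> odd (T x) \<and> fst x < fst y)"

lemma RT_irrefl: "\<not> RT T x x" unfolding RT_def by auto

lemma RT_trans: "RT T x y \<Longrightarrow> RT T y z \<Longrightarrow> RT T x z" unfolding RT_def by auto

lemma card_bij_pred:
  assumes "bij_betw S A B"
  shows "card {p\<in>A. P (S p)} = card {j\<in>B. P j}"
proof -
  have inj: "inj_on S {p\<in>A. P (S p)}" using assms unfolding bij_betw_def by (auto intro: inj_on_subset)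
  have "S ` {p\<in>A. P (S p)} = {j\<in>B. P j}" using assms unfolding bij_betw_def by auto
  then show ?thesis using card_image[OF inj] by simp
qed

context
  fixes lam :: "nat list" and n :: nat
  assumes sp: "strict_partition lam n"
begin

lemma srt: "sorted_wrt (>) lam" using sp unfolding strict_partition_def by simp
lemma n_eq: "sum_list lam = n" using sp unfolding strict_partition_def by simp

lemma st_props:
  assumes "S \<in> standard_shifted_tableaux lam"
  shows "bij_betw S (shifted_diagram lam) {1..n}" "\<And>p. p \<notin> shifted_diagram lam \<Longrightarrow> S p = 0"
    "wmono lam S" "inj_on S (shifted_diagram lam)"
proof -
  show b: "bij_betw S (shifted_diagram lam) {1..n}" using assms n_eq unfolding standard_shifted_tableaux_def by simp
  show "\<And>p. p \<notin> shifted_diagram lam \<Longrightarrow> S p = 0" using assms unfolding standard_shifted_tableaux_def by blast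
  show "wmono lam S" using assms unfolding standard_shifted_tableaux_def wmono_def by (simp add: less_imp_le)
  show "inj_on S (shifted_diagram lam)" using b unfolding bij_betw_def by simp
qed

lemma st_le:
  assumes "S \<in> standard_shifted_tableaux lam" "x \<in> shifted_diagram lam" "y \<in> shifted_diagram lam"
    "fst x \<le> fst y" "snd x \<le> snd y"
  shows "S x \<le> S y"
  using wmono_le2[OF srt st_props(3)[OF assms(1)]] assms by blast

lemma st_row:
  assumes "S \<in> standard_shifted_tableaux lam" "x \<in> shifted_diagram lam"
  shows "row_of lam S (S x) = fst x"
  unfolding row_of_def using the_inv_into_f_f[OF st_props(4)[OF assms(1)] assms(2)] by simp

lemma st_inv:
  assumes "S \<in> standard_shifted_tableaux lam" "i \<in> {1..n}"
  shows "the_inv_into (shifted_diagram lam) S i \<in> shifted_diagram lam"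
    "S (the_inv_into (shifted_diagram lam) S i) = i"
proof -
  have b: "bij_betw S (shifted_diagram lam) {1..n}" using st_props(1)[OF assms(1)] .
  then have "i \<in> S ` shifted_diagram lam" using assms(2) unfolding bij_betw_def by simp
  then show "the_inv_into (shifted_diagram lam) S i \<in> shifted_diagram lam"
    using the_inv_into_into[OF st_props(4)[OF assms(1)]] by blast
  show "S (the_inv_into (shifted_diagram lam) S i) = i"
    using f_the_inv_into_f[OF st_props(4)[OF assms(1)] \<open>i \<in> S ` shifted_diagram lam\<close>] .
qed

lemma st_range:
  assumes "S \<in> standard_shifted_tableaux lam" "x \<in> shifted_diagram lam"
  shows "S x \<in> {1..n}"
  using st_props(1)[OF assms(1)] assms(2) unfolding bij_betw_def by auto

lemma W_props:
  assumes "w \<in> Wset n D \<alpha>"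
  shows "\<And>j. j \<notin> {1..n} \<Longrightarrow> w j = 0" "\<And>j. j \<in> {1..n} \<Longrightarrow> 0 < w j"
    "\<And>i j. 1 \<le> i \<Longrightarrow> i \<le> j \<Longrightarrow> j \<le> n \<Longrightarrow> w i \<le> w j"
    "\<And>j. j \<in> {1..<n} \<Longrightarrow> w j = w (j + 1) \<Longrightarrow> (even (w j) \<longleftrightarrow> j \<notin> D)"
proof -
  show "\<And>j. j \<notin> {1..n} \<Longrightarrow> w j = 0" using assms unfolding Wset_def by blast
  show "\<And>j. j \<in> {1..n} \<Longrightarrow> 0 < w j" using assms unfolding Wset_def by blast
  have m: "\<forall>i\<in>{1..<n}. w i \<le> w (i + 1)" using assms unfolding Wset_def by blast
  show "\<And>i j. 1 \<le> i \<Longrightarrow> i \<le> j \<Longrightarrow> j \<le> n \<Longrightarrow> w i \<le> w j" using mono_interval[OF m] by blast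
  show "\<And>j. j \<in> {1..<n} \<Longrightarrow> w j = w (j + 1) \<Longrightarrow> (even (w j) \<longleftrightarrow> j \<notin> D)" using assms unfolding Wset_def by blast
qed

lemma chain_even:
  assumes S: "S \<in> standard_shifted_tableaux lam" and w: "w \<in> Wset n (tab_Des lam S) \<alpha>"
    and ij: "1 \<le> i" "i \<le> j" "j \<le> n" and eq: "w i = w j" and ev: "even (w i)"
  shows "row_of lam S j \<le> row_of lam S i"
proof (rule chain_le[OF _ ij(2)], intro allI impI)
  fix k assume k: "i \<le> k \<and> k < j"
  have "w i \<le> w k" "w k \<le> w (k + 1)" "w (k + 1) \<le> w j" using W_props(3)[OF w] k ij by auto
  then have wk: "w k = w (k + 1)" "w k = w i" using eq by auto
  have kk: "k \<in> {1..<n}" using k ij by auto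
  then have "k \<notin> tab_Des lam S" using W_props(4)[OF w kk wk(1)] wk ev by simp
  then show "row_of lam S (k + 1) \<le> row_of lam S k" using kk unfolding tab_Des_def n_eq by auto
qed

lemma chain_odd:
  assumes S: "S \<in> standard_shifted_tableaux lam" and w: "w \<in> Wset n (tab_Des lam S) \<alpha>"
    and ij: "1 \<le> i" "i < j" "j \<le> n" and eq: "w i = w j" and od: "odd (w i)"
  shows "row_of lam S i < row_of lam S j"
proof (rule chain_lt[OF _ ij(2)], intro allI impI)
  fix k assume k: "i \<le> k \<and> k < j"
  have "w i \<le> w k" "w k \<le> w (k + 1)" "w (k + 1) \<le> w j" using W_props(3)[OF w] k ij by auto
  then have wk: "w k = w (k + 1)" "w k = w i" using eq by auto
  have kk: "k \<in> {1..<n}" using k ij by auto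
  then have "k \<in> tab_Des lam S" using W_props(4)[OF w kk wk(1)] wk od by simp
  then show "row_of lam S k < row_of lam S (k + 1)" unfolding tab_Des_def by auto
qed

lemma phi_marked:
  assumes S: "S \<in> standard_shifted_tableaux lam" and w: "w \<in> Wset n (tab_Des lam S) \<alpha>"
  shows "(\<lambda>p. w (S p)) \<in> marked_shifted_tableaux lam" "tableau_content lam (\<lambda>p. w (S p)) = \<alpha>"
proof -
  let ?T = "\<lambda>p. w (S p)"
  have c1: "\<forall>p. p \<notin> shifted_diagram lam \<longrightarrow> ?T p = 0" using st_props(2)[OF S] W_props(1)[OF w] by simp
  have c2: "\<forall>p \<in> shifted_diagram lam. 0 < ?T p" using st_range[OF S] W_props(2)[OF w] by blast
  have c3: "\<forall>r c. (r, c) \<in> shifted_diagram lam \<and> (r, c + 1) \<in> shifted_diagram lam \<longrightarrow>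
         ?T (r, c) \<le> ?T (r, c + 1) \<and> (?T (r, c) = ?T (r, c + 1) \<longrightarrow> even (?T (r, c)))"
  proof (intro allI impI)
    fix r c assume rc: "(r, c) \<in> shifted_diagram lam \<and> (r, c + 1) \<in> shifted_diagram lam"
    have lt: "S (r, c) < S (r, c + 1)" using S rc unfolding standard_shifted_tableaux_def by blast
    have rg: "S (r, c) \<in> {1..n}" "S (r, c + 1) \<in> {1..n}" using st_range[OF S] rc by auto
    have le: "?T (r, c) \<le> ?T (r, c + 1)" using W_props(3)[OF w] lt rg by auto
    have "even (?T (r, c))" if e: "?T (r, c) = ?T (r, c + 1)"
    proof (rule ccontr)
      assume "\<not> even (?T (r, c))"
      then have "row_of lam S (S (r, c)) < row_of lam S (S (r, c + 1))"
        using chain_odd[OF S w, of "S (r, c)" "S (r, c + 1)"] lt rg e by auto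
      then show False using st_row[OF S] rc by simp
    qed
    then show "?T (r, c) \<le> ?T (r, c + 1) \<and> (?T (r, c) = ?T (r, c + 1) \<longrightarrow> even (?T (r, c)))" using le by blast
  qed
  have c4: "\<forall>r c. (r, c) \<in> shifted_diagram lam \<and> (r + 1, c) \<in> shifted_diagram lam \<longrightarrow>
         ?T (r, c) \<le> ?T (r + 1, c) \<and> (?T (r, c) = ?T (r + 1, c) \<longrightarrow> odd (?T (r, c)))"
  proof (intro allI impI)
    fix r c assume rc: "(r, c) \<in> shifted_diagram lam \<and> (r + 1, c) \<in> shifted_diagram lam"
    have lt: "S (r, c) < S (r + 1, c)" using S rc unfolding standard_shifted_tableaux_def by blast
    have rg: "S (r, c) \<in> {1..n}" "S (r + 1, c) \<in> {1..n}" using st_range[OF S] rc by auto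
    have le: "?T (r, c) \<le> ?T (r + 1, c)" using W_props(3)[OF w] lt rg by auto
    have "odd (?T (r, c))" if e: "?T (r, c) = ?T (r + 1, c)"
    proof (rule ccontr)
      assume "\<not> odd (?T (r, c))"
      then have "row_of lam S (S (r + 1, c)) \<le> row_of lam S (S (r, c))"
        using chain_even[OF S w, of "S (r, c)" "S (r + 1, c)"] lt rg e by auto
      then show False using st_row[OF S] rc by simp
    qed
    then show "?T (r, c) \<le> ?T (r + 1, c) \<and> (?T (r, c) = ?T (r + 1, c) \<longrightarrow> odd (?T (r, c)))" using le by blast
  qed
  show "?T \<in> marked_shifted_tableaux lam" unfolding marked_shifted_tableaux_def using c1 c2 c3 c4 by blast
  show "tableau_content lam ?T = \<alpha>"
  proof
    fix v
    have "tableau_content lam ?T v = card {j\<in>{1..n}. (w j - 1) div 2 = v}"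
      unfolding tableau_content_def by (rule card_bij_pred[OF st_props(1)[OF S]])
    also have "\<dots> = \<alpha> v" using w unfolding Wset_def by auto
    finally show "tableau_content lam ?T v = \<alpha> v" .
  qed
qed

lemma marked_wmono: "T \<in> marked_shifted_tableaux lam \<Longrightarrow> wmono lam T"
  unfolding marked_shifted_tableaux_def wmono_def by blast

lemma marked_col:
  assumes T: "T \<in> marked_shifted_tableaux lam" and x: "(r1, c) \<in> shifted_diagram lam"
    and y: "(r2, c) \<in> shifted_diagram lam" and r: "r1 < r2" and e: "T (r1, c) = T (r2, c)"
  shows "odd (T (r1, c))"
proof -
  have z: "(r1 + 1, c) \<in> shifted_diagram lam" using col_interval[OF srt x y] r by auto
  have "T (r1, c) \<le> T (r1 + 1, c)" "T (r1 + 1, c) \<le> T (r2, c)"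
    using wmono_le2[OF srt marked_wmono[OF T]] x y z r by auto
  then have "T (r1, c) = T (r1 + 1, c)" using e by simp
  then show ?thesis using T x z unfolding marked_shifted_tableaux_def by blast
qed

lemma marked_row:
  assumes T: "T \<in> marked_shifted_tableaux lam" and x: "(r, c1) \<in> shifted_diagram lam"
    and y: "(r, c2) \<in> shifted_diagram lam" and c: "c1 < c2" and e: "T (r, c1) = T (r, c2)"
  shows "even (T (r, c1))"
proof -
  have z: "(r, c1 + 1) \<in> shifted_diagram lam" using x y c by (auto simp: diag_iff)
  have "T (r, c1) \<le> T (r, c1 + 1)" "T (r, c1 + 1) \<le> T (r, c2)"
    using wmono_le2[OF srt marked_wmono[OF T]] x y z c by auto
  then have "T (r, c1) = T (r, c1 + 1)" using e by simp
  then show ?thesis using T x z unfolding marked_shifted_tableaux_def by blast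
qed

lemma RT_total:
  assumes T: "T \<in> marked_shifted_tableaux lam" and x: "x \<in> shifted_diagram lam"
    and y: "y \<in> shifted_diagram lam" and xy: "x \<noteq> y"
  shows "RT T x y \<or> RT T y x"
proof -
  obtain r1 c1 r2 c2 where xx: "x = (r1, c1)" and yy: "y = (r2, c2)" by fastforce
  show ?thesis
  proof (cases "T x = T y")
    case False then show ?thesis unfolding RT_def by auto
  next
    case True
    show ?thesis
    proof (cases "even (T x)")
      case True
      have "c1 \<noteq> c2"
      proof
        assume "c1 = c2"
        then have "r1 \<noteq> r2" using xy xx yy by simp
        then consider "r1 < r2" | "r2 < r1" by linarith
        then show False
        proof cases
          case 1 then show False using marked_col[OF T, of r1 c1 r2] x y xx yy \<open>c1 = c2\<close> \<open>T x = T y\<close> True by auto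
        next
          case 2 then show False using marked_col[OF T, of r2 c1 r1] x y xx yy \<open>c1 = c2\<close> \<open>T x = T y\<close> True by auto
        qed
      qed
      then show ?thesis unfolding RT_def using True \<open>T x = T y\<close> xx yy by auto
    next
      case False
      have "r1 \<noteq> r2"
      proof
        assume "r1 = r2"
        then have "c1 \<noteq> c2" using xy xx yy by simp
        then consider "c1 < c2" | "c2 < c1" by linarith
        then show False
        proof cases
          case 1 then show False using marked_row[OF T, of r1 c1 c2] x y xx yy \<open>r1 = r2\<close> \<open>T x = T y\<close> False by auto
        next
          case 2 then show False using marked_row[OF T, of r1 c2 c1] x y xx yy \<open>r1 = r2\<close> \<open>T x = T y\<close> False by auto
        qed
      qed
      then show ?thesis unfolding RT_def using False \<open>T x = T y\<close> xx yy by auto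
    qed
  qed
qed

lemma RT_less:
  assumes S: "S \<in> standard_shifted_tableaux lam" and w: "w \<in> Wset n (tab_Des lam S) \<alpha>"
    and x: "x \<in> shifted_diagram lam" and y: "y \<in> shifted_diagram lam" and R: "RT (\<lambda>p. w (S p)) x y"
  shows "S x < S y"
proof (rule ccontr)
  assume "\<not> S x < S y"
  then have yx: "S y \<le> S x" by simp
  have rg: "S x \<in> {1..n}" "S y \<in> {1..n}" using st_range[OF S] x y by auto
  have wle: "w (S y) \<le> w (S x)" using W_props(3)[OF w] yx rg by auto
  have inj: "inj_on S (shifted_diagram lam)" using st_props(4)[OF S] .
  consider "w (S x) < w (S y)"
    | "w (S x) = w (S y)" "even (w (S x))" "snd x < snd y"
    | "w (S x) = w (S y)" "odd (w (S x))" "fst x < fst y"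
    using R unfolding RT_def by auto
  then show False
  proof cases
    case 1 then show False using wle by simp
  next
    case 2
    then have "x \<noteq> y" by auto
    then have "S y < S x" using yx inj x y by (metis inj_on_contraD order_le_imp_less_or_eq)
    then have "row_of lam S (S x) \<le> row_of lam S (S y)"
      using chain_even[OF S w, of "S y" "S x"] rg 2 by auto
    then have "fst x \<le> fst y" using st_row[OF S] x y by simp
    then have "S x \<le> S y" using st_le[OF S x y] 2 by simp
    then show False using \<open>S y < S x\<close> by simp
  next
    case 3
    then have "x \<noteq> y" by auto
    then have "S y < S x" using yx inj x y by (metis inj_on_contraD order_le_imp_less_or_eq)
    then have "row_of lam S (S y) < row_of lam S (S x)"
      using chain_odd[OF S w, of "S y" "S x"] rg 3 by auto
    then have "fst y < fst x" using st_row[OF S] x y by simp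
    then show False using 3 by simp
  qed
qed


definition PS :: "(nat \<Rightarrow> nat) \<Rightarrow> ((nat \<times> nat \<Rightarrow> nat) \<times> (nat \<Rightarrow> nat)) set" where
  "PS \<alpha> = Sigma (standard_shifted_tableaux lam) (\<lambda>S. Wset n (tab_Des lam S) \<alpha>)"

lemma same_order_eq:
  assumes b1: "bij_betw S A {1..n}" and b2: "bij_betw S' A {1..n}"
    and o: "\<forall>x\<in>A. \<forall>y\<in>A. S x < S y \<longleftrightarrow> S' x < S' y" and x: "x \<in> A"
  shows "S x = S' x"
proof -
  have cnt: "card {y\<in>A. U y \<le> U x} = U x" if b: "bij_betw U A {1..n}" for U
  proof -
    have "card {y\<in>A. U y \<le> U x} = card {i\<in>{1..n}. i \<le> U x}" by (rule card_bij_pred[OF b])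
    also have "{i\<in>{1..n}. i \<le> U x} = {1..U x}"
    proof -
      have "U x \<in> {1..n}" using b x unfolding bij_betw_def by auto
      then show ?thesis by auto
    qed
    finally show ?thesis by simp
  qed
  have "{y\<in>A. S y \<le> S x} = {y\<in>A. S' y \<le> S' x}" using o x by (auto simp: not_less[symmetric])
  then show ?thesis using cnt[OF b1] cnt[OF b2] by simp
qed

lemma order_RT:
  assumes S: "S \<in> standard_shifted_tableaux lam" and w: "w \<in> Wset n (tab_Des lam S) \<alpha>"
    and x: "x \<in> shifted_diagram lam" and y: "y \<in> shifted_diagram lam"
  shows "S x < S y \<longleftrightarrow> RT (\<lambda>p. w (S p)) x y"
proof
  assume lt: "S x < S y"
  show "RT (\<lambda>p. w (S p)) x y"
  proof (rule ccontr)
    assume n: "\<not> RT (\<lambda>p. w (S p)) x y"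
    have "x \<noteq> y" using lt by auto
    then have "RT (\<lambda>p. w (S p)) y x" using RT_total[OF phi_marked(1)[OF S w] x y] n by blast
    then have "S y < S x" using RT_less[OF S w y x] by simp
    then show False using lt by simp
  qed
next
  assume "RT (\<lambda>p. w (S p)) x y"
  then show "S x < S y" using RT_less[OF S w x y] by simp
qed

lemma phi_inj:
  assumes p1: "(S, w) \<in> PS \<alpha>" and p2: "(S', w') \<in> PS \<alpha>" and e: "(\<lambda>p. w (S p)) = (\<lambda>p. w' (S' p))"
  shows "S = S' \<and> w = w'"
proof -
  have S: "S \<in> standard_shifted_tableaux lam" and w: "w \<in> Wset n (tab_Des lam S) \<alpha>" using p1 unfolding PS_def by auto
  have S': "S' \<in> standard_shifted_tableaux lam" and w': "w' \<in> Wset n (tab_Des lam S') \<alpha>" using p2 unfolding PS_def by auto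
  have ww: "w = w'"
  proof
    fix j
    show "w j = w' j"
    proof (cases "j \<in> {1..n}")
      case False then show ?thesis using W_props(1)[OF w] W_props(1)[OF w'] by simp
    next
      case True
      have m1: "\<forall>i\<in>{1..<n}. w i \<le> w (i + 1)" using w unfolding Wset_def by blast
      have m2: "\<forall>i\<in>{1..<n}. w' i \<le> w' (i + 1)" using w' unfolding Wset_def by blast
      have "card {j\<in>{1..n}. w j = v} = card {j\<in>{1..n}. w' j = v}" for v
      proof -
        have "card {j\<in>{1..n}. w j = v} = card {p\<in>shifted_diagram lam. w (S p) = v}"
          using card_bij_pred[OF st_props(1)[OF S], of "\<lambda>j. w j = v"] by simp
        also have "\<dots> = card {p\<in>shifted_diagram lam. w' (S' p) = v}" using e by metis
        also have "\<dots> = card {j\<in>{1..n}. w' j = v}"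
          using card_bij_pred[OF st_props(1)[OF S'], of "\<lambda>j. w' j = v"] by simp
        finally show ?thesis .
      qed
      then show ?thesis using sorted_unique[OF m1 m2 _ True] by blast
    qed
  qed
  have SS: "S = S'"
  proof
    fix p
    show "S p = S' p"
    proof (cases "p \<in> shifted_diagram lam")
      case False then show ?thesis using st_props(2)[OF S] st_props(2)[OF S'] by simp
    next
      case True
      have "\<forall>x\<in>shifted_diagram lam. \<forall>y\<in>shifted_diagram lam. S x < S y \<longleftrightarrow> S' x < S' y"
        using order_RT[OF S w] order_RT[OF S' w'] e by simp
      then show ?thesis using same_order_eq[OF st_props(1)[OF S] st_props(1)[OF S'] _ True] by blast
    qed
  qed
  show ?thesis using ww SS by simp
qed

lemma phi_surj:
  assumes T: "T \<in> marked_shifted_tableaux lam" and c: "tableau_content lam T = \<alpha>"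
  shows "\<exists>S w. (S, w) \<in> PS \<alpha> \<and> T = (\<lambda>p. w (S p))"
proof -
  let ?A = "shifted_diagram lam"
  define S where "S x = (if x \<in> ?A then card {y\<in>?A. RT T y x} + 1 else 0)" for x
  have cA: "card ?A = n" using card_diag n_eq by simp
  have rb: "bij_betw (\<lambda>x. card {y\<in>?A. RT T y x} + 1) ?A {1..card ?A}"
    and rl: "\<And>x y. x \<in> ?A \<Longrightarrow> y \<in> ?A \<Longrightarrow> RT T x y \<Longrightarrow> card {z\<in>?A. RT T z x} + 1 < card {z\<in>?A. RT T z y} + 1"
    using rank_bij[OF finite_diag[of lam], where R="RT T"] RT_irrefl RT_trans RT_total[OF T] by blast+
  have bS: "bij_betw S ?A {1..n}"
    using rb cA by (subst bij_betw_cong[of _ S]) (auto simp: S_def)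
  have lS: "S x < S y" if "x \<in> ?A" "y \<in> ?A" "RT T x y" for x y
    using rl[OF that] that by (simp add: S_def)
  have Tm: "\<forall>r c. (r, c) \<in> ?A \<and> (r, c + 1) \<in> ?A \<longrightarrow> T (r, c) \<le> T (r, c + 1) \<and> (T (r, c) = T (r, c + 1) \<longrightarrow> even (T (r, c)))"
    "\<forall>r c. (r, c) \<in> ?A \<and> (r + 1, c) \<in> ?A \<longrightarrow> T (r, c) \<le> T (r + 1, c) \<and> (T (r, c) = T (r + 1, c) \<longrightarrow> odd (T (r, c)))"
    "\<forall>p. p \<notin> ?A \<longrightarrow> T p = 0" "\<forall>p\<in>?A. 0 < T p"
    using T unfolding marked_shifted_tableaux_def by blast+
  have Sst: "S \<in> standard_shifted_tableaux lam"
  proof -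
    have "\<forall>r c. (r, c) \<in> ?A \<and> (r, c + 1) \<in> ?A \<longrightarrow> S (r, c) < S (r, c + 1)"
    proof (intro allI impI)
      fix r c assume rc: "(r, c) \<in> ?A \<and> (r, c + 1) \<in> ?A"
      then have "RT T (r, c) (r, c + 1)" using Tm(1) unfolding RT_def by fastforce
      then show "S (r, c) < S (r, c + 1)" using lS rc by blast
    qed
    moreover have "\<forall>r c. (r, c) \<in> ?A \<and> (r + 1, c) \<in> ?A \<longrightarrow> S (r, c) < S (r + 1, c)"
    proof (intro allI impI)
      fix r c assume rc: "(r, c) \<in> ?A \<and> (r + 1, c) \<in> ?A"
      then have "RT T (r, c) (r + 1, c)" using Tm(2) unfolding RT_def by fastforce
      then show "S (r, c) < S (r + 1, c)" using lS rc by blast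
    qed
    moreover have "\<forall>p. p \<notin> ?A \<longrightarrow> S p = 0" unfolding S_def by simp
    ultimately show ?thesis unfolding standard_shifted_tableaux_def using bS n_eq by simp
  qed
  define w where "w j = (if j \<in> {1..n} then T (the_inv_into ?A S j) else 0)" for j
  have wS: "T = (\<lambda>p. w (S p))"
  proof
    fix p show "T p = w (S p)"
    proof (cases "p \<in> ?A")
      case True
      then have "S p \<in> {1..n}" using st_range[OF Sst] by blast
      then show ?thesis unfolding w_def using the_inv_into_f_f[OF st_props(4)[OF Sst] True] by simp
    next
      case False
      then have "T p = 0" using Tm(3) by blast
      moreover have "w (S p) = 0" using False unfolding w_def S_def by simp
      ultimately show ?thesis by simp
    qed
  qed
  have inv: "the_inv_into ?A S j \<in> ?A" "S (the_inv_into ?A S j) = j" if "j \<in> {1..n}" for j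
    using st_inv[OF Sst that] by auto
  have W1: "\<forall>j. j \<notin> {1..n} \<longrightarrow> w j = 0" unfolding w_def by simp
  have W2: "\<forall>j\<in>{1..n}. 0 < w j" using inv Tm(4) unfolding w_def by simp
  have W3: "\<forall>j\<in>{1..<n}. w j \<le> w (j + 1) \<and> (w j = w (j + 1) \<longrightarrow> (even (w j) \<longleftrightarrow> j \<notin> tab_Des lam S))"
  proof
    fix j assume j: "j \<in> {1..<n}"
    define x where "x = the_inv_into ?A S j"
    define y where "y = the_inv_into ?A S (j + 1)"
    have jj: "j \<in> {1..n}" "j + 1 \<in> {1..n}" using j by auto
    have xA: "x \<in> ?A" "S x = j" using inv[OF jj(1)] unfolding x_def by auto
    have yA: "y \<in> ?A" "S y = j + 1" using inv[OF jj(2)] unfolding y_def by auto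
    have wx: "w j = T x" "w (j + 1) = T y" unfolding w_def x_def y_def using jj by auto
    have rx: "row_of lam S j = fst x" "row_of lam S (j + 1) = fst y" unfolding row_of_def x_def y_def by auto
    have "x \<noteq> y" using xA yA by auto
    have R: "RT T x y"
    proof (rule ccontr)
      assume "\<not> RT T x y"
      then have "RT T y x" using RT_total[OF T xA(1) yA(1) \<open>x \<noteq> y\<close>] by blast
      then have "S y < S x" using lS xA yA by blast
      then show False using xA yA by simp
    qed
    then have le: "T x \<le> T y" unfolding RT_def by auto
    have "even (T x) \<longleftrightarrow> j \<notin> tab_Des lam S" if eq: "T x = T y"
    proof (cases "even (T x)")
      case True
      then have sn: "snd x < snd y" using R eq unfolding RT_def by auto
      have "\<not> fst x < fst y"
      proof
        assume f: "fst x < fst y"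
        have z: "(fst x, snd y) \<in> ?A" using rect[OF srt, of "fst x" "snd x" "fst y" "snd y"] xA yA f sn by auto
        have "T x \<le> T (fst x, snd y)" "T (fst x, snd y) \<le> T y"
          using wmono_le2[OF srt marked_wmono[OF T]] xA yA z sn f by auto
        then have e2: "T (fst x, snd y) = T (fst y, snd y)" using eq by simp
        have "odd (T (fst x, snd y))" using marked_col[OF T z _ f e2] yA by simp
        then show False using True eq e2 by simp
      qed
      then show ?thesis using True rx unfolding tab_Des_def by auto
    next
      case False
      then have "fst x < fst y" using R eq unfolding RT_def by auto
      then show ?thesis using False rx j n_eq unfolding tab_Des_def by auto
    qed
    then show "w j \<le> w (j + 1) \<and> (w j = w (j + 1) \<longrightarrow> (even (w j) \<longleftrightarrow> j \<notin> tab_Des lam S))"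
      using le wx by auto
  qed
  have W4: "\<forall>v. \<alpha> v = card {j \<in> {1..n}. (w j - 1) div 2 = v}"
  proof
    fix v
    have "\<alpha> v = card {p\<in>?A. (T p - 1) div 2 = v}" using c unfolding tableau_content_def by auto
    also have "\<dots> = card {p\<in>?A. (w (S p) - 1) div 2 = v}" using wS by metis
    also have "\<dots> = card {j \<in> {1..n}. (w j - 1) div 2 = v}" by (rule card_bij_pred[OF bS])
    finally show "\<alpha> v = card {j \<in> {1..n}. (w j - 1) div 2 = v}" .
  qed
  have "w \<in> Wset n (tab_Des lam S) \<alpha>" unfolding Wset_def using W1 W2 W3 W4 by blast
  then show ?thesis using Sst wS unfolding PS_def by blast
qed

lemma phi_bij:
  "bij_betw (\<lambda>(S, w). (\<lambda>p. w (S p))) (PS \<alpha>) {T \<in> marked_shifted_tableaux lam. tableau_content lam T = \<alpha>}"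
  unfolding bij_betw_def
proof
  show "inj_on (\<lambda>(S, w). (\<lambda>p. w (S p))) (PS \<alpha>)"
  proof (rule inj_onI)
    fix a b assume "a \<in> PS \<alpha>" "b \<in> PS \<alpha>" "(\<lambda>(S, w). (\<lambda>p. w (S p))) a = (\<lambda>(S, w). (\<lambda>p. w (S p))) b"
    then show "a = b" using phi_inj by (cases a, cases b) auto
  qed
  show "(\<lambda>(S, w). (\<lambda>p. w (S p))) ` PS \<alpha> = {T \<in> marked_shifted_tableaux lam. tableau_content lam T = \<alpha>}"
  proof
    show "(\<lambda>(S, w). (\<lambda>p. w (S p))) ` PS \<alpha> \<subseteq> {T \<in> marked_shifted_tableaux lam. tableau_content lam T = \<alpha>}"
      using phi_marked unfolding PS_def by auto
    show "{T \<in> marked_shifted_tableaux lam. tableau_content lam T = \<alpha>} \<subseteq> (\<lambda>(S, w). (\<lambda>p. w (S p))) ` PS \<alpha>"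
    proof
      fix T assume "T \<in> {T \<in> marked_shifted_tableaux lam. tableau_content lam T = \<alpha>}"
      then obtain S w where "(S, w) \<in> PS \<alpha>" "T = (\<lambda>p. w (S p))" using phi_surj by blast
      then show "T \<in> (\<lambda>(S, w). (\<lambda>p. w (S p))) ` PS \<alpha>" by force
    qed
  qed
qed

lemma finite_ST: "finite (standard_shifted_tableaux lam)"
proof -
  have "standard_shifted_tableaux lam \<subseteq> {f. \<forall>x. (x \<in> shifted_diagram lam \<longrightarrow> f x \<in> {1..n}) \<and> (x \<notin> shifted_diagram lam \<longrightarrow> f x = 0)}"
    using st_props(2) st_range by blast
  then show ?thesis using finite_set_of_finite_funs[OF finite_diag[of lam], of "{1..n}" 0] finite_subset by blast
qed

lemma KEY:
  assumes n1: "1 \<le> n"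
  shows "SchurQ lam \<alpha> = (\<Sum>S\<in>standard_shifted_tableaux lam. Theta n (tab_Peak lam S) \<alpha>)"
proof -
  have finW: "finite (Wset n D \<alpha>)" for D
  proof (cases "Fset n \<alpha> = {}")
    case True then show ?thesis using W_empty by simp
  next
    case False
    then obtain f0 where "f0 \<in> Fset n \<alpha>" by blast
    then show ?thesis using W_image by simp
  qed
  have "SchurQ lam \<alpha> = real (card (PS \<alpha>))"
    unfolding SchurQ_def using bij_betw_same_card[OF phi_bij] by simp
  also have "card (PS \<alpha>) = (\<Sum>S\<in>standard_shifted_tableaux lam. card (Wset n (tab_Des lam S) \<alpha>))"
    unfolding PS_def using finite_ST finW by simp
  also have "real \<dots> = (\<Sum>S\<in>standard_shifted_tableaux lam. real (card (Wset n (tab_Des lam S) \<alpha>)))" by simp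
  also have "\<dots> = (\<Sum>S\<in>standard_shifted_tableaux lam. Theta n (tab_Peak lam S) \<alpha>)"
  proof (rule sum.cong[OF refl])
    fix S assume "S \<in> standard_shifted_tableaux lam"
    have D: "tab_Des lam S \<subseteq> {1..<n}" unfolding tab_Des_def n_eq by auto
    show "real (card (Wset n (tab_Des lam S) \<alpha>)) = Theta n (tab_Peak lam S) \<alpha>"
      unfolding tab_Peak_def by (rule ENR[OF n1 D])
  qed
  finally show ?thesis .
qed
end


lemma alphaP:
  assumes P: "P \<subseteq> {1..<n}"
  defines "f0 \<equiv> (\<lambda>j. if j \<in> {1..n} then card {s\<in>P. s < j} else 0)"
  shows "f0 \<in> Fset n (\<lambda>v. card {j\<in>{1..n}. f0 j = v})" "Sof n f0 = P"
proof -
  have finP: "finite P" using P finite_subset by blast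
  have step: "card {s\<in>P. s < j + 1} = (if j \<in> P then Suc (card {s\<in>P. s < j}) else card {s\<in>P. s < j})" for j
  proof -
    have "{s\<in>P. s < j + 1} = (if j \<in> P then insert j {s\<in>P. s < j} else {s\<in>P. s < j})" by (auto simp add: less_Suc_eq)
    then show ?thesis using finP by auto
  qed
  have m: "\<forall>j\<in>{1..<n}. f0 j \<le> f0 (j + 1)"
  proof
    fix j assume j: "j \<in> {1..<n}"
    then show "f0 j \<le> f0 (j + 1)" unfolding f0_def using step[of j] by auto
  qed
  show "f0 \<in> Fset n (\<lambda>v. card {j\<in>{1..n}. f0 j = v})"
    unfolding Fset_def using m unfolding f0_def by auto
  show "Sof n f0 = P"
  proof
    show "Sof n f0 \<subseteq> P"
    proof
      fix j assume "j \<in> Sof n f0"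
      then have j: "j \<in> {1..<n}" "f0 j < f0 (j + 1)" unfolding Sof_def by auto
      then show "j \<in> P" unfolding f0_def using step[of j] by (auto split: if_splits)
    qed
    show "P \<subseteq> Sof n f0"
    proof
      fix j assume "j \<in> P"
      then have j: "j \<in> {1..<n}" using P by auto
      then show "j \<in> Sof n f0" unfolding Sof_def f0_def using step[of j] \<open>j \<in> P\<close> by auto
    qed
  qed
qed

definition peakset :: "nat \<Rightarrow> nat set \<Rightarrow> bool" where
  "peakset n Q \<longleftrightarrow> Q \<subseteq> {1..<n} \<and> 0 \<notin> Q \<and> (\<forall>q\<in>Q. q + 1 \<notin> Q)"

lemma HP_peakset: "K \<in> compositions n \<Longrightarrow> peakset n (HP K)"
  unfolding peakset_def HP_def using Des_sub by fastforce

lemma Theta_alpha: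
  assumes n: "1 \<le> n" and P: "peakset n P" and Q: "peakset n Q"
  defines "f0 \<equiv> (\<lambda>j. if j \<in> {1..n} then card {s\<in>P. s < j} else 0)"
  defines "\<alpha> \<equiv> (\<lambda>v. card {j\<in>{1..n}. f0 j = v})"
  shows "Theta n Q \<alpha> \<noteq> 0 \<Longrightarrow> \<forall>q\<in>Q. q \<in> P \<or> q - 1 \<in> P"
    and "Theta n P \<alpha> \<noteq> 0"
proof -
  have Ps: "P \<subseteq> {1..<n}" using P unfolding peakset_def by auto
  have fF: "f0 \<in> Fset n \<alpha>" and Sf: "Sof n f0 = P" using alphaP[OF Ps] unfolding f0_def \<alpha>_def by auto
  have finP: "finite P" using Ps finite_subset by blast
  have gen: "Theta n R \<alpha> = 2 * (if \<forall>q\<in>R. q \<in> P \<or> q - 1 \<in> P then 2 ^ card P else 0)" if R: "peakset n R" for R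
  proof -
    have R0: "0 \<notin> R" and Rc: "\<forall>q\<in>R. q + 1 \<notin> R" and finR: "finite R"
      using R unfolding peakset_def by (auto intro: finite_subset)
    have "Theta n R \<alpha> = 2 ^ (card R + 1) * real (card (Rset P R))"
      using Theta_eval[OF n fF R0] Sf by simp
    also have "\<dots> = 2 * real (2 ^ card R * card (Rset P R))" by simp
    also have "2 ^ card R * card (Rset P R) = (if \<forall>q\<in>R. q \<in> P \<or> q - 1 \<in> P then 2 ^ card P else 0)"
      using Rset_count[OF finR finP R0 Rc] .
    finally show ?thesis by simp
  qed
  show "Theta n Q \<alpha> \<noteq> 0 \<Longrightarrow> \<forall>q\<in>Q. q \<in> P \<or> q - 1 \<in> P" using gen[OF Q] by (auto split: if_splits)
  show "Theta n P \<alpha> \<noteq> 0" using gen[OF P] by simp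
qed

lemma peak_compare:
  assumes n: "1 \<le> n" and P: "peakset n P" and Q: "peakset n Q"
    and cov: "\<forall>q\<in>Q. q \<in> P \<or> q - 1 \<in> P" and ne: "Q \<noteq> P"
  shows "card Q < card P \<or> (card Q = card P \<and> \<Sum>P < \<Sum>Q)"
proof -
  have finP: "finite P" and finQ: "finite Q" using P Q unfolding peakset_def by (auto intro: finite_subset)
  have Q0: "0 \<notin> Q" and Qc: "\<forall>q\<in>Q. q + 1 \<notin> Q" using Q unfolding peakset_def by auto
  define g where "g q = (if q \<in> P then q else q - 1)" for q
  have gP: "g ` Q \<subseteq> P" using cov unfolding g_def by auto
  have gle: "\<forall>q\<in>Q. g q \<le> q" unfolding g_def by auto
  have inj: "inj_on g Q"
  proof (rule inj_onI)
    fix x y assume x: "x \<in> Q" and y: "y \<in> Q" and e: "g x = g y"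
    have x0: "x \<noteq> 0" using x Q0 by metis
    have y0: "y \<noteq> 0" using y Q0 by metis
    show "x = y"
    proof (cases "x \<in> P")
      case True
      show ?thesis
      proof (cases "y \<in> P")
        case True then show ?thesis using e \<open>x \<in> P\<close> unfolding g_def by simp
      next
        case False
        then have "x = y - 1" using e \<open>x \<in> P\<close> unfolding g_def by simp
        then have "x + 1 = y" using y0 by simp
        then show ?thesis using Qc x y by blast
      qed
    next
      case False
      show ?thesis
      proof (cases "y \<in> P")
        case True
        then have "y = x - 1" using e False unfolding g_def by simp
        then have "y + 1 = x" using x0 by simp
        then show ?thesis using Qc x y by blast
      next
        case False
        then show ?thesis using e \<open>x \<notin> P\<close> x0 y0 unfolding g_def by simp
      qed
    qed
  qed
  have cle: "card Q \<le> card P" using card_inj_on_le[OF inj gP finP] .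
  show ?thesis
  proof (cases "card Q < card P")
    case True then show ?thesis by simp
  next
    case False
    then have ceq: "card Q = card P" using cle by simp
    have "card (g ` Q) = card P" using card_image[OF inj] ceq by simp
    then have gQ: "g ` Q = P" using gP finP by (intro card_subset_eq) auto
    have sP: "\<Sum>P = (\<Sum>q\<in>Q. g q)" using sum.reindex[OF inj, of id] gQ by simp
    have "\<exists>q\<in>Q. g q < q"
    proof (rule ccontr)
      assume "\<not> (\<exists>q\<in>Q. g q < q)"
      then have "\<forall>q\<in>Q. q \<in> P" using Q0 unfolding g_def by (metis diff_less less_numeral_extra(1) neq0_conv)
      then have "Q \<subseteq> P" by blast
      then have "Q = P" using ceq finP by (intro card_subset_eq) auto
      then show False using ne by simp
    qed
    then have "(\<Sum>q\<in>Q. g q) < (\<Sum>q\<in>Q. q)" using sum_strict_mono_ex1[OF finQ gle] by blast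
    then show ?thesis using ceq sP by simp
  qed
qed

lemma peak_sum_bound:
  assumes "peakset n Q"
  shows "\<Sum>Q \<le> n * n" and "card Q \<le> n"
proof -
  have Qs: "Q \<subseteq> {1..<n}" using assms unfolding peakset_def by auto
  have c: "card Q \<le> card {1..<n}" using Qs by (intro card_mono) auto
  then show cn: "card Q \<le> n" by simp
  have "\<And>i. i \<in> Q \<Longrightarrow> i \<le> n" using Qs by auto
  then have "sum (\<lambda>x. x) Q \<le> of_nat (card Q) * n" by (rule sum_bounded_above)
  then have "\<Sum>Q \<le> card Q * n" by simp
  also have "\<dots> \<le> n * n" using cn by simp
  finally show "\<Sum>Q \<le> n * n" .
qed

lemma IND:
  assumes n: "1 \<le> n" and C: "C \<subseteq> compositions n"
    and inj: "\<forall>I\<in>C. \<forall>J\<in>C. HP I = HP J \<longrightarrow> I = J"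
    and z: "\<forall>\<alpha>. (\<Sum>I\<in>C. c I * Theta n (HP I) \<alpha>) = 0"
  shows "\<forall>I\<in>C. c I = 0"
proof (rule ccontr)
  assume "\<not> (\<forall>I\<in>C. c I = 0)"
  then obtain I1 where I1: "I1 \<in> C" "c I1 \<noteq> 0" by blast
  define \<mu> where "\<mu> I = card (HP I) * (n * n + 1) + (n * n - \<Sum>(HP I))" for I
  obtain I0 where I0: "I0 \<in> C \<and> c I0 \<noteq> 0" and I0min: "\<forall>I. I \<in> C \<and> c I \<noteq> 0 \<longrightarrow> \<mu> I0 \<le> \<mu> I"
    using ex_has_least_nat[of "\<lambda>I. I \<in> C \<and> c I \<noteq> 0" I1 \<mu>] I1 by blast
  define P where "P = HP I0"
  have Pp: "peakset n P" unfolding P_def using HP_peakset I0 C by blast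
  define f0 where "f0 = (\<lambda>j. if j \<in> {1..n} then card {s\<in>P. s < j} else 0)"
  define \<alpha> where "\<alpha> = (\<lambda>v. card {j\<in>{1..n}. f0 j = v})"
  have finC: "finite C" using C finite_compositions[OF n] finite_subset by blast
  have other: "c I * Theta n (HP I) \<alpha> = 0" if I: "I \<in> C" "I \<noteq> I0" for I
  proof (rule ccontr)
    assume a: "c I * Theta n (HP I) \<alpha> \<noteq> 0"
    then have cI: "c I \<noteq> 0" and th: "Theta n (HP I) \<alpha> \<noteq> 0" by auto
    have Qp: "peakset n (HP I)" using HP_peakset I C by blast
    have cov: "\<forall>q\<in>HP I. q \<in> P \<or> q - 1 \<in> P"
      using Theta_alpha(1)[OF n Pp Qp th[unfolded \<alpha>_def f0_def]] .
    have ne: "HP I \<noteq> P" using inj I I0 unfolding P_def by blast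
    have "\<mu> I < \<mu> I0"
    proof -
      have bP: "\<Sum>P \<le> n * n" and bQ: "\<Sum>(HP I) \<le> n * n" using peak_sum_bound Pp Qp by auto
      consider "card (HP I) < card P" | "card (HP I) = card P" "\<Sum>P < \<Sum>(HP I)"
        using peak_compare[OF n Pp Qp cov ne] by blast
      then show ?thesis
      proof cases
        case 1
        then have "card (HP I) + 1 \<le> card P" by simp
        then have "(card (HP I) + 1) * (n * n + 1) \<le> card P * (n * n + 1)" by (rule mult_right_mono) simp
        then show ?thesis unfolding \<mu>_def P_def[symmetric] by simp
      next
        case 2
        then show ?thesis unfolding \<mu>_def P_def[symmetric] using bP bQ by simp
      qed
    qed
    then show False using I0min I cI by fastforce
  qed
  have "(\<Sum>I\<in>C - {I0}. c I * Theta n (HP I) \<alpha>) = 0" by (rule sum.neutral) (use other in auto)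
  then have "(\<Sum>I\<in>C. c I * Theta n (HP I) \<alpha>) = c I0 * Theta n (HP I0) \<alpha>"
    using sum.remove[OF finC, of I0 "\<lambda>I. c I * Theta n (HP I) \<alpha>"] I0 by simp
  then have "c I0 * Theta n P \<alpha> = 0" using z P_def by simp
  moreover have "Theta n P \<alpha> \<noteq> 0" using Theta_alpha(2)[OF n Pp Pp] unfolding \<alpha>_def f0_def by simp
  ultimately show False using I0 by simp
qed


theorem mainTheorem14:
  fixes lam :: "nat list" and n :: nat and C :: "nat list set"
  assumes "n \<ge> 1"
    and "strict_partition lam n"
    and "C \<subseteq> compositions n"
    and "\<forall>K \<in> compositions n. \<exists>!I. I \<in> C \<and> HP I = HP K"
  shows "\<forall>d :: nat list \<Rightarrow> real.
     (\<forall>\<alpha>. SchurQ lam \<alpha> / 2 ^ (length lam div 2) =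
           (\<Sum>I\<in>C. d I * Theta n (HP I) \<alpha> / 2 ^ ((card (HP I) + 1) div 2)))
     \<longleftrightarrow>
     (\<forall>I \<in> C. d I = 2 ^ ((card (HP I) + 1) div 2) / 2 ^ (length lam div 2) *
        real (card {T \<in> standard_shifted_tableaux lam. tab_Peak lam T = HP I}))"
proof -
  have n1: "1 \<le> n" using assms(1) .
  have sp: "strict_partition lam n" using assms(2) .
  have lamn: "sum_list lam = n" using n_eq[OF sp] .
  have finC: "finite C" using assms(3) finite_compositions[OF n1] finite_subset by blast
  have injC: "\<forall>I\<in>C. \<forall>J\<in>C. HP I = HP J \<longrightarrow> I = J"
  proof (intro ballI impI)
    fix I J assume I: "I \<in> C" and J: "J \<in> C" and e: "HP I = HP J"
    have "\<exists>!I'. I' \<in> C \<and> HP I' = HP I" using assms(4) assms(3) I by blast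
    then show "I = J" using I J e by metis
  qed
  define ST where "ST = standard_shifted_tableaux lam"
  define A where "A I = {T \<in> ST. tab_Peak lam T = HP I}" for I
  define L where "L = length lam div 2"
  define k where "k I = (card (HP I) + 1) div 2" for I
  have finST: "finite ST" unfolding ST_def using finite_ST[OF sp] .
  have exI: "\<exists>I\<in>C. HP I = tab_Peak lam T" if T: "T \<in> ST" for T
  proof -
    have sub: "tab_Peak lam T \<subseteq> {1..<n}" unfolding tab_Peak_def tab_Des_def lamn by auto
    obtain K where K: "K \<in> compositions n" "Des K = tab_Peak lam T" using Des_surj[OF n1 sub] by blast
    have "HP K = tab_Peak lam T"
    proof
      show "HP K \<subseteq> tab_Peak lam T" unfolding HP_def K(2) by auto
      show "tab_Peak lam T \<subseteq> HP K"
      proof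
        fix a assume a: "a \<in> tab_Peak lam T"
        have "a - 1 \<notin> tab_Peak lam T" using a unfolding tab_Peak_def by auto
        then show "a \<in> HP K" using a unfolding HP_def K(2) by (auto simp: tab_Peak_def)
      qed
    qed
    then show ?thesis using assms(4) K(1) by metis
  qed
  have sumST: "(\<Sum>T\<in>ST. Theta n (tab_Peak lam T) \<alpha>) = (\<Sum>I\<in>C. real (card (A I)) * Theta n (HP I) \<alpha>)" for \<alpha>
  proof -
    have finA: "\<forall>I\<in>C. finite (A I)" unfolding A_def using finST by auto
    have disj: "\<forall>I\<in>C. \<forall>J\<in>C. I \<noteq> J \<longrightarrow> A I \<inter> A J = {}" unfolding A_def using injC by auto
    have U: "\<Union>(A ` C) = ST" unfolding A_def using exI by (auto; metis)
    have "(\<Sum>I\<in>C. real (card (A I)) * Theta n (HP I) \<alpha>) = (\<Sum>I\<in>C. \<Sum>T\<in>A I. Theta n (tab_Peak lam T) \<alpha>)"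
    proof (rule sum.cong[OF refl])
      fix I assume "I \<in> C"
      have "(\<Sum>T\<in>A I. Theta n (tab_Peak lam T) \<alpha>) = (\<Sum>T\<in>A I. Theta n (HP I) \<alpha>)"
        unfolding A_def by (rule sum.cong) auto
      then show "real (card (A I)) * Theta n (HP I) \<alpha> = (\<Sum>T\<in>A I. Theta n (tab_Peak lam T) \<alpha>)" by simp
    qed
    also have "\<dots> = (\<Sum>T\<in>\<Union>(A ` C). Theta n (tab_Peak lam T) \<alpha>)"
      using sum.UNION_disjoint[OF finC finA disj, of "\<lambda>T. Theta n (tab_Peak lam T) \<alpha>"] by simp
    finally show ?thesis using U by simp
  qed
  have Q: "SchurQ lam \<alpha> / 2 ^ L = (\<Sum>I\<in>C. real (card (A I)) / 2 ^ L * Theta n (HP I) \<alpha>)" for \<alpha>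
  proof -
    have "SchurQ lam \<alpha> = (\<Sum>I\<in>C. real (card (A I)) * Theta n (HP I) \<alpha>)"
      using KEY[OF sp n1, of \<alpha>] sumST unfolding ST_def by simp
    then show ?thesis by (simp add: sum_divide_distrib)
  qed
  have main: "(\<forall>\<alpha>. SchurQ lam \<alpha> / 2 ^ L = (\<Sum>I\<in>C. d I * Theta n (HP I) \<alpha> / 2 ^ k I))
       \<longleftrightarrow> (\<forall>I\<in>C. d I = 2 ^ k I / 2 ^ L * real (card (A I)))" for d :: "nat list \<Rightarrow> real"
  proof
    assume H: "\<forall>\<alpha>. SchurQ lam \<alpha> / 2 ^ L = (\<Sum>I\<in>C. d I * Theta n (HP I) \<alpha> / 2 ^ k I)"
    have "\<forall>\<alpha>. (\<Sum>I\<in>C. (d I / 2 ^ k I - real (card (A I)) / 2 ^ L) * Theta n (HP I) \<alpha>) = 0"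
    proof
      fix \<alpha>
      have "(\<Sum>I\<in>C. (d I / 2 ^ k I - real (card (A I)) / 2 ^ L) * Theta n (HP I) \<alpha>)
          = (\<Sum>I\<in>C. d I * Theta n (HP I) \<alpha> / 2 ^ k I) - (\<Sum>I\<in>C. real (card (A I)) / 2 ^ L * Theta n (HP I) \<alpha>)"
        by (simp add: sum_subtractf left_diff_distrib)
      also have "\<dots> = 0" using H Q by simp
      finally show "(\<Sum>I\<in>C. (d I / 2 ^ k I - real (card (A I)) / 2 ^ L) * Theta n (HP I) \<alpha>) = 0" .
    qed
    then have "\<forall>I\<in>C. d I / 2 ^ k I - real (card (A I)) / 2 ^ L = 0"
      using IND[OF n1 assms(3) injC, of "\<lambda>I. d I / 2 ^ k I - real (card (A I)) / 2 ^ L"] by blast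
    then show "\<forall>I\<in>C. d I = 2 ^ k I / 2 ^ L * real (card (A I))"
      by (auto simp: field_simps)
  next
    assume H: "\<forall>I\<in>C. d I = 2 ^ k I / 2 ^ L * real (card (A I))"
    show "\<forall>\<alpha>. SchurQ lam \<alpha> / 2 ^ L = (\<Sum>I\<in>C. d I * Theta n (HP I) \<alpha> / 2 ^ k I)"
    proof
      fix \<alpha>
      have "(\<Sum>I\<in>C. d I * Theta n (HP I) \<alpha> / 2 ^ k I) = (\<Sum>I\<in>C. real (card (A I)) / 2 ^ L * Theta n (HP I) \<alpha>)"
        using H by (intro sum.cong) auto
      then show "SchurQ lam \<alpha> / 2 ^ L = (\<Sum>I\<in>C. d I * Theta n (HP I) \<alpha> / 2 ^ k I)" using Q by simp
    qed
  qed
  show ?thesis using main unfolding L_def k_def A_def ST_def by blast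
qed


end
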